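(* Let $N\ge2$, $a\in\mathbb{R}$, $\alpha\in(0,1]$, and let $P$ be a symmetric, doubly stochastic $N\times N$ matrix with nonnegative entries and eigenvalues $-1<\lambda_N(P)\le\dots\le\lambda_2(P)<\lambda_1(P)=1$; let $Q=a(P-\alpha I_N)$ and suppose its spectral radius satisfies $\rho(Q)<1$. Consider the state $x_{t+1}=ax_t+r_t$, observations $y_{i,t}=x_t+w_{i,t}$, and either of the estimators $$\hat{x}_{i,t+1}=a\Big(\sum_{j} p_{ij}\hat{x}_{j,t}+\alpha(y_{i,t}-\hat{x}_{i,t})\Big)\quad\text{or}\quad \tilde{x}_{i,t+1}=a\Big(\sum_{j} p_{ij}\tilde{x}_{j,t}+\alpha\Big(\sum_{j} p_{ij}y_{j,t}-\tilde{x}_{i,t}\Big)\Big),$$ with error vector $\xi_t=(x_{i,t}-x_t)_{i=1}^N$ (for the chosen estimator), which satisfies $\xi_{t+1}=Q\xi_t+s_t$ where $s_t=(\alpha a)[w_{1,t},\dots,w_{N,t}]^{\mathsf T}-r_t\mathbf{1}_N$ for the first estimator and $s_t=(\alpha a)P[w_{1,t},\dots,w_{N,t}]^{\mathsf T}-r_t\mathbf{1}_N$ for the second. Assume the $s_t$ are independent over $t$, zero mean, with common covariance $S=\mathbb{E}[s_ts_t^{\mathsf T}]$ (innovations with variance $\sigma_r^2$, observation noises with variance $\sigma_w^2$ independent across agents and uncorrelated with innovations), and that $\max_{t\le T}\|s_t\|\le s$ for some $s>0$. Let $\Sigma=\lim_{t\to\infty}\mathbb{E}[\xi_t\xi_t^{\mathsf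 T}]$ and define the regret $$R_T=\frac1N\mathrm{Tr}\Big(\frac1T\sum_{t=1}^T\xi_t\xi_t^{\mathsf T}-\Sigma\Big).$$ Then for every $\delta\in(0,1)$, with probability at least $1-\delta$, $$R_T\le\frac1T\frac{\|\xi_0\|^2}{1-\rho^2(Q)}+\frac1T\frac{2s\|\xi_0\|}{(1-\rho(Q))^2}+\frac1T\frac{s^2}{(1-\rho^2(Q))^2}+\frac{1}{\sqrt T}\frac{8s^2\sqrt{2\log\frac N\delta}}{(1-\rho(Q))^2}.$$
   Context: $\|\cdot\|$ denotes the Euclidean norm for vectors; $\rho(Q)$ is the spectral radius of $Q$ (equal to its largest singular value since $Q$ is symmetric); $\xi_0$ is the initial error vector. *)

theory Defs
  imports "HOL-Probability.Probability"
begin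

definition real_eigenvalue :: "real^'n^'n \<Rightarrow> real \<Rightarrow> bool" where
  "real_eigenvalue A c \<longleftrightarrow> (\<exists>v. v \<noteq> 0 \<and> A *v v = c *\<^sub>R v)"

definition complex_eigenvalue :: "real^'n^'n \<Rightarrow> complex \<Rightarrow> bool" where
  "complex_eigenvalue A c \<longleftrightarrow>
     (\<exists>v::complex^'n. v \<noteq> 0 \<and> (\<chi> i j. complex_of_real (A$i$j)) *v v = c *s v)"

definition spectral_radius :: "real^'n^'n \<Rightarrow> real" where
  "spectral_radius A = Sup {cmod c | c. complex_eigenvalue A c}"

definition doubly_stochastic :: "real^'n^'n \<Rightarrow> bool" where
  "doubly_stochastic P \<longleftrightarrow> (\<forall>i j. P$i$j \<ge> 0) \<and>
     (\<forall>i. (\<Sum>j\<in>UNIV. P$i$j) = 1) \<and> (\<forall>j. (\<Sum>i\<in>UNIV. P$i$j) = 1)"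

definition outer :: "real^'n \<Rightarrow> real^'n^'n" where
  "outer v = (\<chi> i j. v$i * v$j)"

definition mtrace :: "real^'n^'n \<Rightarrow> real" where
  "mtrace A = (\<Sum>i\<in>UNIV. A$i$i)"

definition second_moment :: "'a measure \<Rightarrow> ('a \<Rightarrow> real^'n) \<Rightarrow> real^'n^'n" where
  "second_moment M X = (\<chi> i j. integral\<^sup>L M (\<lambda>\<omega>. X \<omega> $ i * X \<omega> $ j))"

end

theory Submission
  imports Defs
begin


lemma complex_eigenvalue_bound:
  fixes A :: "real^'n^'n"
  assumes "complex_eigenvalue A c"
  shows "cmod c \<le> (\<Sum>i\<in>UNIV. \<Sum>j\<in>UNIV. \<bar>A$i$j\<bar>)"
proof -
  obtain v :: "complex^'n" where v: "v \<noteq> 0" "(\<chi> i j. complex_of_real (A$i$j)) *v v = c *s v"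
    using assms unfolding complex_eigenvalue_def by blast
  obtain i where i0: "cmod (v$i) = Max (range (\<lambda>j. cmod (v$j)))"
  proof -
    have "Max (range (\<lambda>j. cmod (v$j))) \<in> range (\<lambda>j. cmod (v$j))" by (rule Max_in) auto
    then obtain j where "Max (range (\<lambda>j. cmod (v$j))) = cmod (v$j)" by blast
    then show ?thesis using that[of j] by simp
  qed
  have i: "cmod (v$j) \<le> cmod (v$i)" for j
    unfolding i0 by (rule Max_ge) auto
  have vi: "cmod (v$i) > 0"
  proof (rule ccontr)
    assume "\<not> cmod (v$i) > 0"
    then have "\<And>j. v$j = 0" using i by (metis norm_le_zero_iff not_less order_trans)
    then have "v = 0" by (simp add: vec_eq_iff)
    with v show False by simp
  qed
  have "c * v$i = (\<Sum>j\<in>UNIV. complex_of_real (A$i$j) * v$j)"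
    using arg_cong[OF v(2), of "\<lambda>w. w$i"] by (simp add: matrix_vector_mult_def)
  then have "cmod c * cmod (v$i) = cmod (\<Sum>j\<in>UNIV. complex_of_real (A$i$j) * v$j)"
    by (metis norm_mult)
  also have "\<dots> \<le> (\<Sum>j\<in>UNIV. \<bar>A$i$j\<bar> * cmod (v$j))"
    by (rule order.trans[OF norm_sum]) (simp add: norm_mult)
  also have "\<dots> \<le> (\<Sum>j\<in>UNIV. \<bar>A$i$j\<bar> * cmod (v$i))"
    by (intro sum_mono mult_left_mono i) auto
  also have "\<dots> = (\<Sum>j\<in>UNIV. \<bar>A$i$j\<bar>) * cmod (v$i)" by (simp add: sum_distrib_right)
  finally have "cmod c \<le> (\<Sum>j\<in>UNIV. \<bar>A$i$j\<bar>)" using vi by simp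
  also have "\<dots> \<le> (\<Sum>i\<in>UNIV. \<Sum>j\<in>UNIV. \<bar>A$i$j\<bar>)"
    by (rule member_le_sum[where f="\<lambda>i. \<Sum>j\<in>UNIV. \<bar>A$i$j\<bar>"]) (auto intro: sum_nonneg)
  finally show ?thesis .
qed

lemma real_to_complex_eigenvalue:
  assumes "A *v u = c *\<^sub>R u" "u \<noteq> 0"
  shows "complex_eigenvalue A (complex_of_real c)"
  unfolding complex_eigenvalue_def
proof (intro exI conjI)
  let ?v = "\<chi> i. complex_of_real (u$i)"
  show "?v \<noteq> 0" using assms(2) by (auto simp: vec_eq_iff)
  show "(\<chi> i j. complex_of_real (A$i$j)) *v ?v = complex_of_real c *s ?v"
  proof -
    have "\<And>i. (\<Sum>j\<in>UNIV. A$i$j * u$j) = c * u$i"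
      using assms(1) by (auto simp: vec_eq_iff matrix_vector_mult_def)
    then show ?thesis
      by (auto simp: vec_eq_iff matrix_vector_mult_def simp flip: of_real_mult of_real_sum)
  qed
qed

lemma norm_sq_add_scale: "(norm (x + t *\<^sub>R y))\<^sup>2 = (norm x)\<^sup>2 + 2 * t * inner x y + t\<^sup>2 * (norm (y::'a::real_inner))\<^sup>2"
  unfolding power2_norm_eq_inner by (simp add: inner_add_left inner_add_right inner_commute power2_eq_square algebra_simps)

lemma sym_inner: "transpose A = A \<Longrightarrow> inner (A *v x) y = inner x (A *v (y::real^'n))"
  by (metis dot_lmul_matrix vector_transpose_matrix)

lemma spectral_norm:
  fixes A :: "real^'n^'n"
  assumes sym: "transpose A = A"
  shows "norm (A *v v) \<le> spectral_radius A * norm v" "0 \<le> spectral_radius A"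
proof -
  define K where "K = (\<Sum>i\<in>UNIV. \<Sum>j\<in>UNIV. \<bar>A$i$j\<bar>)"
  have bdd: "bdd_above {cmod c | c. complex_eigenvalue A c}"
    unfolding bdd_above_def using complex_eigenvalue_bound K_def by blast
  have ne: "sphere (0::real^'n) 1 \<noteq> {}"
    using vector_choose_size[of 1] by (auto simp: sphere_def)
  obtain v0 where v0: "v0 \<in> sphere 0 1" and max: "\<And>y. y \<in> sphere 0 1 \<Longrightarrow> norm (A *v y) \<le> norm (A *v v0)"
  proof -
    have "continuous_on (sphere 0 1) (\<lambda>v. norm (A *v v))"
      by (intro continuous_on_norm linear_continuous_on matrix_vector_mul_bounded_linear)
    then show ?thesis using continuous_attains_sup[OF compact_sphere ne, of "\<lambda>v. norm (A *v v)"] that by blast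
  qed
  define m where "m = norm (A *v v0)"
  have nv0: "norm v0 = 1" using v0 by auto
  have gen: "norm (A *v v) \<le> m * norm v" for v
  proof (cases "v = 0")
    case True then show ?thesis by simp
  next
    case False
    have "(1 / norm v) *\<^sub>R v \<in> sphere 0 1" using False by auto
    from max[OF this] have "norm (A *v ((1 / norm v) *\<^sub>R v)) \<le> m" by (simp add: m_def)
    then have "norm (A *v v) / norm v \<le> m" by (simp add: matrix_vector_mult_scaleR divide_inverse mult.commute)
    then show ?thesis using False by (simp add: divide_le_eq mult.commute)
  qed
  define w where "w = A *v (A *v v0) - m\<^sup>2 *\<^sub>R v0"
  have key: "2 * t * inner w w \<le> t\<^sup>2 * (m\<^sup>2 * inner w w)" for t
  proof -
    have "(norm (A *v (v0 + t *\<^sub>R w)))\<^sup>2 \<le> (m * norm (v0 + t *\<^sub>R w))\<^sup>2"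
      using gen[of "v0 + t *\<^sub>R w"] by (intro power_mono) auto
    also have "\<dots> = m\<^sup>2 * (1 + 2 * t * inner v0 w + t\<^sup>2 * inner w w)"
    proof -
      have vv: "inner v0 v0 = 1" using nv0 by (simp add: power2_norm_eq_inner[symmetric])
      have "(norm (v0 + t *\<^sub>R w))\<^sup>2 = inner (v0 + t *\<^sub>R w) (v0 + t *\<^sub>R w)" by (rule power2_norm_eq_inner)
      also have "\<dots> = 1 + 2 * t * inner v0 w + t\<^sup>2 * inner w w"
        using vv by (simp add: inner_add_left inner_add_right inner_commute power2_eq_square algebra_simps)
      finally show ?thesis by (simp add: power_mult_distrib)
    qed
    finally have h: "(norm (A *v (v0 + t *\<^sub>R w)))\<^sup>2 \<le> m\<^sup>2 * (1 + 2 * t * inner v0 w + t\<^sup>2 * inner w w)" .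
    have "(norm (A *v (v0 + t *\<^sub>R w)))\<^sup>2 = m\<^sup>2 + 2 * t * inner (A *v v0) (A *v w) + t\<^sup>2 * (norm (A *v w))\<^sup>2"
      by (simp add: m_def matrix_vector_right_distrib matrix_vector_mult_scaleR norm_sq_add_scale)
    moreover have "inner (A *v v0) (A *v w) = inner (A *v (A *v v0)) w"
      using sym_inner[OF sym] by simp
    moreover have "inner (A *v (A *v v0)) w = inner w w + m\<^sup>2 * inner v0 w"
      by (simp add: w_def inner_diff_left inner_commute)
    ultimately have "m\<^sup>2 + 2 * t * (inner w w + m\<^sup>2 * inner v0 w) + t\<^sup>2 * (norm (A *v w))\<^sup>2 \<le> m\<^sup>2 * (1 + 2 * t * inner v0 w + t\<^sup>2 * inner w w)"
      using h by simp
    then have "2 * t * inner w w \<le> t\<^sup>2 * (m\<^sup>2 * inner w w) - t\<^sup>2 * (norm (A *v w))\<^sup>2"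
      by (simp add: algebra_simps)
    also have "\<dots> \<le> t\<^sup>2 * (m\<^sup>2 * inner w w)" by simp
    finally show ?thesis .
  qed
  have w0: "w = 0"
  proof (rule ccontr)
    assume "w \<noteq> 0"
    then have wp: "inner w w > 0" by simp
    define t where "t = 1 / (m\<^sup>2 + 1)"
    have mp: "0 < m\<^sup>2 + 1" using zero_le_power2[of m] by linarith
    then have tp: "t > 0" by (simp add: t_def)
    have "2 * t * inner w w \<le> t * (t * m\<^sup>2) * inner w w" using key[of t] by (simp add: power2_eq_square algebra_simps)
    then have "2 \<le> t * m\<^sup>2" using tp wp by (simp add: mult.assoc)
    moreover have "t * m\<^sup>2 < 1" using mp by (simp add: t_def divide_less_eq)
    ultimately show False by simp
  qed
  then have AA: "A *v (A *v v0) = m\<^sup>2 *\<^sub>R v0" by (simp add: w_def)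
  have ev: "complex_eigenvalue A (complex_of_real m) \<or> complex_eigenvalue A (complex_of_real (- m))"
  proof (cases "A *v v0 + m *\<^sub>R v0 = 0")
    case True
    then have "A *v v0 = (- m) *\<^sub>R v0" by (simp add: add_eq_0_iff2)
    moreover have "v0 \<noteq> 0" using nv0 by auto
    ultimately show ?thesis using real_to_complex_eigenvalue by blast
  next
    case False
    have "A *v (A *v v0 + m *\<^sub>R v0) = m *\<^sub>R (A *v v0 + m *\<^sub>R v0)"
      by (simp add: matrix_vector_right_distrib matrix_vector_mult_scaleR AA algebra_simps power2_eq_square)
    then show ?thesis using real_to_complex_eigenvalue False by blast
  qed
  have mle: "m \<le> spectral_radius A"
  proof -
    have "m \<in> {cmod c | c. complex_eigenvalue A c}"
    proof (rule disjE[OF ev])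
      assume "complex_eigenvalue A (complex_of_real m)"
      moreover have "m = cmod (complex_of_real m)" by (simp add: m_def)
      ultimately show ?thesis by blast
    next
      assume "complex_eigenvalue A (complex_of_real (- m))"
      moreover have "m = cmod (complex_of_real (- m))" by (simp add: m_def)
      ultimately show ?thesis by blast
    qed
    then show ?thesis unfolding spectral_radius_def by (rule cSup_upper[OF _ bdd])
  qed
  show "norm (A *v v) \<le> spectral_radius A * norm v"
    using gen[of v] mle by (meson mult_right_mono norm_ge_zero order_trans)
  show "0 \<le> spectral_radius A" using mle by (simp add: m_def order_trans[OF norm_ge_zero])
qed
definition sqi :: "'a measure \<Rightarrow> ('a \<Rightarrow> real) \<Rightarrow> bool" where
  "sqi M f \<longleftrightarrow> f \<in> borel_measurable M \<and> integrable M (\<lambda>\<omega>. (f \<omega>)\<^sup>2)"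

definition sqv :: "'a measure \<Rightarrow> ('a \<Rightarrow> real^'n) \<Rightarrow> bool" where
  "sqv M X \<longleftrightarrow> (\<forall>i. sqi M (\<lambda>\<omega>. X \<omega> $ i))"

lemma sqi_mult:
  assumes "sqi M f" "sqi M g"
  shows "integrable M (\<lambda>\<omega>. f \<omega> * g \<omega>)"
proof (rule Bochner_Integration.integrable_bound[where f="\<lambda>\<omega>. (f \<omega>)\<^sup>2 + (g \<omega>)\<^sup>2"])
  show "integrable M (\<lambda>\<omega>. (f \<omega>)\<^sup>2 + (g \<omega>)\<^sup>2)" using assms by (auto simp: sqi_def)
  show "(\<lambda>\<omega>. f \<omega> * g \<omega>) \<in> borel_measurable M" using assms by (auto simp: sqi_def)
  show "AE x in M. norm (f x * g x) \<le> norm ((f x)\<^sup>2 + (g x)\<^sup>2)"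
  proof (rule AE_I2)
    fix x
    have "2 * \<bar>f x * g x\<bar> \<le> (f x)\<^sup>2 + (g x)\<^sup>2"
      using sum_squares_bound[of "\<bar>f x\<bar>" "\<bar>g x\<bar>"] by (simp add: abs_mult power2_abs)
    then show "norm (f x * g x) \<le> norm ((f x)\<^sup>2 + (g x)\<^sup>2)" by simp
  qed
qed

lemma sqi_int:
  assumes "prob_space M" "sqi M f"
  shows "integrable M f"
proof -
  interpret prob_space M by fact
  have "integrable M (\<lambda>\<omega>. f \<omega> * 1)"
    by (rule sqi_mult[OF assms(2)]) (simp add: sqi_def)
  then show ?thesis by simp
qed

lemma sqi_add: "sqi M f \<Longrightarrow> sqi M g \<Longrightarrow> sqi M (\<lambda>\<omega>. f \<omega> + g \<omega>)"
  unfolding sqi_def power2_sum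
  by (auto intro!: Bochner_Integration.integrable_add integrable_mult_right sqi_mult[unfolded sqi_def])

lemma sqi_scale: "sqi M f \<Longrightarrow> sqi M (\<lambda>\<omega>. c * f \<omega>)"
  unfolding sqi_def by (auto simp: power_mult_distrib)

lemma sqi_diff: "sqi M f \<Longrightarrow> sqi M g \<Longrightarrow> sqi M (\<lambda>\<omega>. f \<omega> - g \<omega>)"
  using sqi_add[of M f "\<lambda>\<omega>. (-1) * g \<omega>"] sqi_scale[of M g "-1"] by simp

lemma sqi_const: "prob_space M \<Longrightarrow> sqi M (\<lambda>_. c)"
  unfolding sqi_def using prob_space.finite_measure by (auto intro: finite_measure.integrable_const)

lemma sqi_sum: "prob_space M \<Longrightarrow> (\<And>k. k \<in> K \<Longrightarrow> sqi M (f k)) \<Longrightarrow> sqi M (\<lambda>\<omega>. \<Sum>k\<in>K. f k \<omega>)"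
proof (induction K rule: infinite_finite_induct)
  case (infinite A) then show ?case by (simp add: sqi_const)
next
  case empty then show ?case by (simp add: sqi_const)
next
  case (insert x F) then show ?case by (simp add: sqi_add)
qed

lemma sqv_add: "sqv M X \<Longrightarrow> sqv M Y \<Longrightarrow> sqv M (\<lambda>\<omega>. X \<omega> + Y \<omega>)"
  unfolding sqv_def by (simp add: sqi_add)

lemma sqv_diff: "sqv M X \<Longrightarrow> sqv M Y \<Longrightarrow> sqv M (\<lambda>\<omega>. X \<omega> - Y \<omega>)"
  unfolding sqv_def by (simp add: sqi_diff)

lemma sqv_scale: assumes "sqi M f" shows "sqv M (\<lambda>\<omega>. f \<omega> *\<^sub>R v)"
proof -
  { fix i have "sqi M (\<lambda>\<omega>. v$i * f \<omega>)" by (rule sqi_scale) fact }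
  then show ?thesis by (simp add: sqv_def mult.commute)
qed

lemma sqv_scaleR: "sqv M X \<Longrightarrow> sqv M (\<lambda>\<omega>. c *\<^sub>R X \<omega>)"
  unfolding sqv_def by (simp add: sqi_scale)

lemma sqv_const: "prob_space M \<Longrightarrow> sqv M (\<lambda>_. v)"
  unfolding sqv_def by (simp add: sqi_const)

lemma sqv_sum: "prob_space M \<Longrightarrow> (\<And>k. k \<in> K \<Longrightarrow> sqv M (X k)) \<Longrightarrow> sqv M (\<lambda>\<omega>. \<Sum>k\<in>K. X k \<omega>)"
  unfolding sqv_def by (auto simp: sum_component intro!: sqi_sum)

lemma sqv_mat: "prob_space M \<Longrightarrow> sqv M X \<Longrightarrow> sqv M (\<lambda>\<omega>. A *v X \<omega>)"
  unfolding sqv_def matrix_vector_mult_def by (auto intro!: sqi_sum sqi_scale)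

lemma sqv_int: "prob_space M \<Longrightarrow> sqv M X \<Longrightarrow> integrable M (\<lambda>\<omega>. X \<omega> $ i)"
  unfolding sqv_def by (auto intro: sqi_int)

lemma sqv_inner_int:
  assumes "sqv M X" "sqv M Y"
  shows "integrable M (\<lambda>\<omega>. inner (X \<omega>) (Y \<omega>))"
    "(\<integral>\<omega>. inner (X \<omega>) (Y \<omega>) \<partial>M) = (\<Sum>i\<in>UNIV. \<integral>\<omega>. X \<omega> $ i * Y \<omega> $ i \<partial>M)"
proof -
  have h: "\<And>i. integrable M (\<lambda>\<omega>. X \<omega> $ i * Y \<omega> $ i)"
    using assms unfolding sqv_def by (auto intro: sqi_mult)
  show "integrable M (\<lambda>\<omega>. inner (X \<omega>) (Y \<omega>))"
    unfolding inner_vec_def using h by simp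
  show "(\<integral>\<omega>. inner (X \<omega>) (Y \<omega>) \<partial>M) = (\<Sum>i\<in>UNIV. \<integral>\<omega>. X \<omega> $ i * Y \<omega> $ i \<partial>M)"
    unfolding inner_vec_def using h by (simp add: integral_sum)
qed

lemma sqv_mat_integral:
  assumes "prob_space M" "sqv M X"
  shows "(\<integral>\<omega>. (A *v X \<omega>) $ i \<partial>M) = (\<Sum>j\<in>UNIV. A$i$j * (\<integral>\<omega>. X \<omega> $ j \<partial>M))"
  unfolding matrix_vector_mult_def using sqv_int[OF assms]
  by (simp add: integral_sum)

lemma mcdiarmid_aux:
  fixes \<mu> :: "nat \<Rightarrow> 'a measure" and f :: "(nat \<Rightarrow> 'a) \<Rightarrow> real"
  assumes Pmu: "\<And>i. prob_space (\<mu> i)"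
  and meas: "f \<in> borel_measurable (PiM {..<n} \<mu>)"
  and bnd: "\<And>x. x \<in> space (PiM {..<n} \<mu>) \<Longrightarrow> \<bar>f x\<bar> \<le> B"
  and bd: "\<And>x k y. x \<in> space (PiM {..<n} \<mu>) \<Longrightarrow> k < n \<Longrightarrow> y \<in> space (\<mu> k) \<Longrightarrow> \<bar>f x - f (x(k:=y))\<bar> \<le> c"
  and l: "l > 0"
  shows "(\<integral>\<^sup>+x. ennreal (exp (l * (f x - (\<integral>x. f x \<partial>PiM {..<n} \<mu>)))) \<partial>PiM {..<n} \<mu>) \<le> ennreal (exp (l\<^sup>2 * real n * c\<^sup>2 / 2))"
  using meas bnd bd
proof (induction n arbitrary: f)
  case 0
  have "(\<integral>\<^sup>+x. ennreal (exp (l * (f x - (\<integral>x. f x \<partial>PiM {..<0::nat} \<mu>)))) \<partial>PiM {..<0} \<mu>)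
     = (\<integral>\<^sup>+x. ennreal (exp (l * (f x - f (\<lambda>_. undefined)))) \<partial>count_space {\<lambda>_. undefined})"
    by (simp add: PiM_empty lebesgue_integral_count_space_finite)
  also have "\<dots> = 1" by (simp add: nn_integral_count_space_finite)
  finally show ?case by simp
next
  case (Suc n)
  interpret product_prob_space \<mu> UNIV
    using Pmu by (simp add: product_prob_space_def product_prob_space_axioms_def product_sigma_finite_def prob_space_imp_sigma_finite)
  have ins: "{..<Suc n} = insert n {..<n}" by auto
  have fm: "f \<in> borel_measurable (PiM (insert n {..<n}) \<mu>)" using Suc.prems(1) ins by simp
  have fbnd: "\<And>x. x \<in> space (PiM (insert n {..<n}) \<mu>) \<Longrightarrow> \<bar>f x\<bar> \<le> B"
    using Suc.prems(2) ins by simp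
  interpret PS: prob_space "PiM (insert n {..<n}) \<mu>" by (rule prob_space_PiM) (rule Pmu)
  interpret PN: prob_space "PiM {..<n} \<mu>" by (rule prob_space_PiM) (rule Pmu)
  interpret Mn: prob_space "\<mu> n" by (rule Pmu)
  have fint: "integrable (PiM (insert n {..<n}) \<mu>) f"
    by (intro PS.integrable_const_bound[where B=B] AE_I2) (use fbnd fm in auto)
  have upd: "x(n:=y) \<in> space (PiM (insert n {..<n}) \<mu>)" if "x \<in> space (PiM {..<n} \<mu>)" "y \<in> space (\<mu> n)" for x y
    using that by (auto simp: space_PiM PiE_def extensional_def)
  have hm: "(\<lambda>y. f (x(n:=y))) \<in> borel_measurable (\<mu> n)" if "x \<in> space (PiM {..<n} \<mu>)" for x
    using measurable_comp[OF measurable_component_update fm, OF that] by (simp add: comp_def fun_upd_def)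
  define g where "g x = (\<integral>y. f (x(n:=y)) \<partial>\<mu> n)" for x
  have gm: "g \<in> borel_measurable (PiM {..<n} \<mu>)"
    unfolding g_def
  proof (rule sigma_finite_measure.borel_measurable_lebesgue_integral[OF prob_space_imp_sigma_finite[OF Pmu]])
    show "(\<lambda>(x, y). f (x(n := y))) \<in> borel_measurable (PiM {..<n} \<mu> \<Otimes>\<^sub>M \<mu> n)"
      using measurable_comp[OF measurable_add_dim fm] by (simp add: comp_def case_prod_beta)
  qed
  have hint: "integrable (\<mu> n) (\<lambda>y. f (x(n:=y)))" if "x \<in> space (PiM {..<n} \<mu>)" for x
    by (intro M.integrable_const_bound[where B=B] AE_I2) (use fbnd hm upd that in auto)
  have gbnd: "\<bar>g x\<bar> \<le> B" if x: "x \<in> space (PiM {..<n} \<mu>)" for x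
  proof -
    have "\<bar>g x\<bar> \<le> (\<integral>y. \<bar>f (x(n:=y))\<bar> \<partial>\<mu> n)" unfolding g_def
      by (rule integral_abs_bound)
    also have "\<dots> \<le> (\<integral>y. B \<partial>\<mu> n)"
      by (intro integral_mono) (use hint[OF x] fbnd upd x in auto)
    finally show ?thesis by (simp add: M.prob_space)
  qed
  have gbd: "\<bar>g x - g (x(k:=y))\<bar> \<le> c" if x: "x \<in> space (PiM {..<n} \<mu>)" and k: "k < n" and y: "y \<in> space (\<mu> k)" for x k y
  proof -
    have x': "x(k:=y) \<in> space (PiM {..<n} \<mu>)" using x y k by (auto simp: space_PiM PiE_def extensional_def)
    have "g x - g (x(k:=y)) = (\<integral>z. f (x(n:=z)) - f ((x(n:=z))(k:=y)) \<partial>\<mu> n)"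
      unfolding g_def using k
      by (subst Bochner_Integration.integral_diff) (auto intro!: hint x x' simp: fun_upd_twist)
    also have "\<bar>\<dots>\<bar> \<le> (\<integral>z. c \<partial>\<mu> n)"
    proof (rule order.trans[OF integral_abs_bound], rule integral_mono)
      show "integrable (\<mu> n) (\<lambda>z. \<bar>f (x(n:=z)) - f ((x(n:=z))(k:=y))\<bar>)"
        using k by (auto intro!: hint x x' simp: fun_upd_twist)
      fix z assume z: "z \<in> space (\<mu> n)"
      have xz: "x(n:=z) \<in> space (PiM {..<Suc n} \<mu>)" using upd[OF x z] ins by simp
      have kk: "k < Suc n" using k by simp
      show "\<bar>f (x(n:=z)) - f ((x(n:=z))(k:=y))\<bar> \<le> c"
        using Suc.prems(3)[OF xz kk y] .
    qed auto
    finally show ?thesis by (simp add: M.prob_space)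
  qed
  have Eq: "(\<integral>x. f x \<partial>PiM {..<Suc n} \<mu>) = (\<integral>x. g x \<partial>PiM {..<n} \<mu>)"
    unfolding ins g_def by (rule product_integral_insert[OF _ _ fint]) auto
  define E where "E = (\<integral>x. g x \<partial>PiM {..<n} \<mu>)"
  have inner: "(\<integral>\<^sup>+y. ennreal (exp (l * (f (x(n:=y)) - g x))) \<partial>\<mu> n) \<le> ennreal (exp (l\<^sup>2 * c\<^sup>2 / 2))"
    if x: "x \<in> space (PiM {..<n} \<mu>)" for x
  proof -
    obtain y0 where y0: "y0 \<in> space (\<mu> n)" using M.not_empty by blast
    interpret H: interval_bounded_random_variable "\<mu> n" "\<lambda>y. f (x(n:=y))" "f (x(n:=y0)) - c" "f (x(n:=y0)) + c"
    proof
      show "(\<lambda>y. f (x(n:=y))) \<in> borel_measurable (\<mu> n)" by (rule hm[OF x])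
      show "AE y in \<mu> n. f (x(n:=y)) \<in> {f (x(n:=y0)) - c..f (x(n:=y0)) + c}"
      proof (rule AE_I2)
        fix y assume "y \<in> space (\<mu> n)"
        moreover have xz: "x(n:=y0) \<in> space (PiM {..<Suc n} \<mu>)" using upd[OF x y0] ins by simp
        have nn: "n < Suc n" by simp
        ultimately have "\<bar>f (x(n:=y0)) - f ((x(n:=y0))(n:=y))\<bar> \<le> c"
          using Suc.prems(3)[OF xz nn] by blast
        then show "f (x(n:=y)) \<in> {f (x(n:=y0)) - c..f (x(n:=y0)) + c}" by (simp add: abs_le_iff)
      qed
    qed
    have "(\<integral>\<^sup>+y. ennreal (exp (l * (f (x(n:=y)) - g x))) \<partial>\<mu> n) \<le> ennreal (exp (l\<^sup>2 * (f (x(n:=y0)) + c - (f (x(n:=y0)) - c))\<^sup>2 / 8))"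
      using H.Hoeffdings_lemma_nn_integral[OF l] unfolding g_def by simp
    also have "(f (x(n:=y0)) + c - (f (x(n:=y0)) - c))\<^sup>2 = 4 * c\<^sup>2" by (simp add: power2_eq_square algebra_simps)
    finally show ?thesis by (simp add: fun_upd_def mult.commute)
  qed
  have "(\<integral>\<^sup>+x. ennreal (exp (l * (f x - (\<integral>x. f x \<partial>PiM {..<Suc n} \<mu>)))) \<partial>PiM {..<Suc n} \<mu>)
      = (\<integral>\<^sup>+x. (\<integral>\<^sup>+y. ennreal (exp (l * (f (x(n:=y)) - E))) \<partial>\<mu> n) \<partial>PiM {..<n} \<mu>)"
  proof -
    have EE: "(\<integral>x. f x \<partial>PiM {..<Suc n} \<mu>) = E" unfolding E_def by (rule Eq)
    have [measurable]: "f \<in> borel_measurable (PiM (insert n {..<n}) \<mu>)" by (rule fm)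
    show ?thesis unfolding EE unfolding ins
      by (rule product_nn_integral_insert) auto
  qed
  also have "\<dots> = (\<integral>\<^sup>+x. ennreal (exp (l * (g x - E))) * (\<integral>\<^sup>+y. ennreal (exp (l * (f (x(n:=y)) - g x))) \<partial>\<mu> n) \<partial>PiM {..<n} \<mu>)"
  proof (rule nn_integral_cong)
    fix x assume x: "x \<in> space (PiM {..<n} \<mu>)"
    have "(\<integral>\<^sup>+y. ennreal (exp (l * (f (x(n:=y)) - E))) \<partial>\<mu> n) = (\<integral>\<^sup>+y. ennreal (exp (l * (g x - E))) * ennreal (exp (l * (f (x(n:=y)) - g x))) \<partial>\<mu> n)"
      by (intro nn_integral_cong) (simp add: ennreal_mult'[symmetric] exp_add[symmetric] algebra_simps)
    also have "\<dots> = ennreal (exp (l * (g x - E))) * (\<integral>\<^sup>+y. ennreal (exp (l * (f (x(n:=y)) - g x))) \<partial>\<mu> n)"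
      by (rule nn_integral_cmult) (use hm[OF x] in measurable)
    finally show "(\<integral>\<^sup>+y. ennreal (exp (l * (f (x(n:=y)) - E))) \<partial>\<mu> n) = ennreal (exp (l * (g x - E))) * (\<integral>\<^sup>+y. ennreal (exp (l * (f (x(n:=y)) - g x))) \<partial>\<mu> n)" .
  qed
  also have "\<dots> \<le> (\<integral>\<^sup>+x. ennreal (exp (l * (g x - E))) * ennreal (exp (l\<^sup>2 * c\<^sup>2 / 2)) \<partial>PiM {..<n} \<mu>)"
    by (intro nn_integral_mono mult_left_mono inner) auto
  also have "\<dots> = (\<integral>\<^sup>+x. ennreal (exp (l * (g x - E))) \<partial>PiM {..<n} \<mu>) * ennreal (exp (l\<^sup>2 * c\<^sup>2 / 2))"
    by (rule nn_integral_multc) (use gm in measurable)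
  also have "\<dots> \<le> ennreal (exp (l\<^sup>2 * real n * c\<^sup>2 / 2)) * ennreal (exp (l\<^sup>2 * c\<^sup>2 / 2))"
    unfolding E_def by (intro mult_right_mono Suc.IH gm gbnd gbd) auto
  also have "\<dots> = ennreal (exp (l\<^sup>2 * real (Suc n) * c\<^sup>2 / 2))"
    by (simp add: ennreal_mult'[symmetric] exp_add[symmetric] algebra_simps)
  finally show ?case .
qed

lemma (in prob_space) mcdiarmid_M:
  fixes X :: "nat \<Rightarrow> 'a \<Rightarrow> 'b::topological_space" and G :: "(nat \<Rightarrow> 'b) \<Rightarrow> real"
  assumes ind: "indep_vars (\<lambda>_. borel) X {..<n}" and n: "n \<ge> 1"
  and Gm: "G \<in> borel_measurable (PiM {..<n} (\<lambda>_. borel))"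
  and Gb: "\<And>z. \<bar>G z\<bar> \<le> B"
  and Gd: "\<And>z k y. k < n \<Longrightarrow> \<bar>G z - G (z(k:=y))\<bar> \<le> c"
  and l: "l > 0"
  shows "measure M {\<omega> \<in> space M. (\<integral>\<omega>. G (restrict (\<lambda>i. X i \<omega>) {..<n}) \<partial>M) + \<epsilon> \<le> G (restrict (\<lambda>i. X i \<omega>) {..<n})}
          \<le> exp (- l * \<epsilon> + l\<^sup>2 * real n * c\<^sup>2 / 2)"
proof -
  define Z where "Z = (\<lambda>\<omega>. restrict (\<lambda>i. X i \<omega>) {..<n})"
  have rv: "i \<in> {..<n} \<Longrightarrow> random_variable borel (X i)" for i
    using ind unfolding indep_vars_def by blast
  have DZ: "distr M (PiM {..<n} (\<lambda>_. borel)) Z = PiM {..<n} (\<lambda>i. distr M borel (X i))"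
  proof -
    have "0 \<in> {..<n}" using n by simp
    then have "{..<n} \<noteq> {}" by blast
    then show ?thesis unfolding Z_def by (intro indep_vars_iff_distr_eq_PiM'[THEN iffD1, OF _ rv ind])
  qed
  have Zm: "Z \<in> measurable M (PiM {..<n} (\<lambda>_. borel))"
    unfolding Z_def by (intro measurable_restrict rv) auto
  define \<mu> where "\<mu> i = (if i < n then distr M borel (X i) else return borel undefined)" for i
  have Pmu: "prob_space (\<mu> i)" for i
    unfolding \<mu>_def using rv by (auto intro!: prob_space_distr prob_space_return)
  have PiEq: "PiM {..<n} \<mu> = distr M (PiM {..<n} (\<lambda>_. borel)) Z"
    unfolding DZ by (intro PiM_cong) (auto simp: \<mu>_def)
  have setsEq: "sets (PiM {..<n} \<mu>) = sets (PiM {..<n} (\<lambda>_. borel))"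
    by (intro sets_PiM_cong) (auto simp: \<mu>_def)
  have Gm': "G \<in> borel_measurable (PiM {..<n} \<mu>)"
    using Gm by (subst measurable_cong_sets[OF setsEq refl])
  define EG where "EG = (\<integral>\<omega>. G (Z \<omega>) \<partial>M)"
  have EGeq: "(\<integral>x. G x \<partial>PiM {..<n} \<mu>) = EG"
    unfolding PiEq EG_def by (rule integral_distr[OF Zm Gm])
  have mc: "(\<integral>\<^sup>+x. ennreal (exp (l * (G x - (\<integral>x. G x \<partial>PiM {..<n} \<mu>)))) \<partial>PiM {..<n} \<mu>) \<le> ennreal (exp (l\<^sup>2 * real n * c\<^sup>2 / 2))"
    by (rule mcdiarmid_aux[OF Pmu Gm' Gb]) (auto intro: Gd l)
  have "(\<integral>\<^sup>+x. ennreal (exp (l * (G x - EG))) \<partial>PiM {..<n} \<mu>) = (\<integral>\<^sup>+\<omega>. ennreal (exp (l * (G (Z \<omega>) - EG))) \<partial>M)"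
    unfolding PiEq by (rule nn_integral_distr[OF Zm]) (use Gm in measurable)
  with mc EGeq have mc2: "(\<integral>\<^sup>+\<omega>. ennreal (exp (l * (G (Z \<omega>) - EG))) \<partial>M) \<le> ennreal (exp (l\<^sup>2 * real n * c\<^sup>2 / 2))"
    by simp
  have GZm: "(\<lambda>\<omega>. G (Z \<omega>)) \<in> borel_measurable M" using measurable_comp[OF Zm Gm] by (simp add: comp_def)
  define Bad where "Bad = {\<omega> \<in> space M. EG + \<epsilon> \<le> G (Z \<omega>)}"
  have Badm: "Bad \<in> sets M" unfolding Bad_def using GZm by measurable
  have "emeasure M Bad = (\<integral>\<^sup>+\<omega>. indicator Bad \<omega> \<partial>M)" using Badm by simp
  also have "\<dots> \<le> (\<integral>\<^sup>+\<omega>. ennreal (exp (l * (G (Z \<omega>) - EG))) * ennreal (exp (- l * \<epsilon>)) \<partial>M)"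
  proof (rule nn_integral_mono)
    fix \<omega> assume "\<omega> \<in> space M"
    show "indicator Bad \<omega> \<le> ennreal (exp (l * (G (Z \<omega>) - EG))) * ennreal (exp (- l * \<epsilon>))"
    proof (cases "\<omega> \<in> Bad")
      case True
      then have "0 \<le> l * (G (Z \<omega>) - EG - \<epsilon>)" using l by (auto simp: Bad_def)
      then have "0 \<le> l * (G (Z \<omega>) - EG) + (- l * \<epsilon>)" by (simp add: algebra_simps)
      then have "1 \<le> exp (l * (G (Z \<omega>) - EG) + (- l * \<epsilon>))" using one_le_exp_iff by blast
      then have "1 \<le> exp (l * (G (Z \<omega>) - EG)) * exp (- l * \<epsilon>)" by (simp only: exp_add)
      then have "ennreal 1 \<le> ennreal (exp (l * (G (Z \<omega>) - EG)) * exp (- l * \<epsilon>))" by (rule ennreal_leI)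
      then have "1 \<le> ennreal (exp (l * (G (Z \<omega>) - EG)) * exp (- l * \<epsilon>))" by simp
      then show ?thesis using True by (simp add: ennreal_mult)
    qed simp
  qed
  also have "\<dots> = (\<integral>\<^sup>+\<omega>. ennreal (exp (l * (G (Z \<omega>) - EG))) \<partial>M) * ennreal (exp (- l * \<epsilon>))"
    by (rule nn_integral_multc) (use GZm in measurable)
  also have "\<dots> \<le> ennreal (exp (l\<^sup>2 * real n * c\<^sup>2 / 2)) * ennreal (exp (- l * \<epsilon>))"
    by (intro mult_right_mono mc2) auto
  also have "\<dots> = ennreal (exp (- l * \<epsilon> + l\<^sup>2 * real n * c\<^sup>2 / 2))"
    by (simp add: ennreal_mult'[symmetric] exp_add[symmetric] algebra_simps)
  finally have "emeasure M Bad \<le> ennreal (exp (- l * \<epsilon> + l\<^sup>2 * real n * c\<^sup>2 / 2))" .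
  then have "measure M Bad \<le> exp (- l * \<epsilon> + l\<^sup>2 * real n * c\<^sup>2 / 2)"
    by (simp add: emeasure_eq_measure)
  then show ?thesis unfolding Bad_def EG_def Z_def .
qed



lemma vnth_meas[measurable (raw)]: "f \<in> borel_measurable M \<Longrightarrow> (\<lambda>\<omega>. (f \<omega>::real^'n) $ i) \<in> borel_measurable M"
  using measurable_comp[of f M borel "\<lambda>v. v $ i" borel]
    borel_measurable_continuous_onI[OF linear_continuous_on[OF bounded_linear_vec_nth]]
  by (simp add: comp_def)

lemma mv_meas[measurable (raw)]: "f \<in> borel_measurable M \<Longrightarrow> (\<lambda>\<omega>. (A::real^'n^'m) *v f \<omega>) \<in> borel_measurable M"
  using measurable_comp[of f M borel "\<lambda>v. A *v v" borel]
    borel_measurable_continuous_onI[OF linear_continuous_on[OF matrix_vector_mul_bounded_linear[of A]]]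
  by (simp add: comp_def)

lemma geo1:
  fixes \<rho> :: real assumes "0 \<le> \<rho>" "\<rho> < 1"
  shows "(\<Sum>k<t. \<rho>^(t-1-k)) \<le> 1/(1-\<rho>)"
proof -
  have eq: "(1-\<rho>) * (\<Sum>k<t. \<rho>^(t-1-k)) = 1 - \<rho>^t"
  proof (induction t)
    case 0 then show ?case by simp
  next
    case (Suc t)
    define S where "S = (\<Sum>k<t. \<rho>^(t-1-k))"
    have "(\<Sum>k<Suc t. \<rho>^(Suc t-1-k)) = (\<Sum>k<t. \<rho>^(t-k)) + 1" by simp
    also have "(\<Sum>k<t. \<rho>^(t-k)) = \<rho> * S"
      unfolding S_def sum_distrib_left by (intro sum.cong refl) (auto simp: Suc_diff_Suc power_Suc[symmetric])
    finally have e1: "(\<Sum>k<Suc t. \<rho>^(Suc t-1-k)) = \<rho> * S + 1" .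
    have "(1-\<rho>)*(\<rho>*S+1) = \<rho>*((1-\<rho>)*S) + (1-\<rho>)" by algebra
    also have "\<dots> = \<rho>*(1-\<rho>^t) + (1-\<rho>)" using Suc.IH by (simp add: S_def)
    also have "\<dots> = 1 - \<rho>^Suc t" by (simp add: algebra_simps)
    finally show ?case using e1 by simp
  qed
  have "1 - \<rho>^t \<le> 1" using assms by simp
  then have "(1-\<rho>) * (\<Sum>k<t. \<rho>^(t-1-k)) \<le> 1" using eq by simp
  then show ?thesis using assms by (simp add: field_simps)
qed

lemma geo2:
  fixes \<rho> :: real assumes "0 \<le> \<rho>" "\<rho> < 1"
  shows "(\<Sum>t<n. if k < t then \<rho>^(t-1-k) else 0) \<le> 1/(1-\<rho>)"
proof -
  have eq: "(1-\<rho>) * (\<Sum>t<n. if k < t then \<rho>^(t-1-k) else 0) = (if k < n then 1 - \<rho>^(n-1-k) else 0)"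
  proof (induction n)
    case 0 then show ?case by simp
  next
    case (Suc n)
    define S where "S = (\<Sum>t<n. if k < t then \<rho>^(t-1-k) else 0)"
    have e1: "(\<Sum>t<Suc n. if k < t then \<rho>^(t-1-k) else 0) = S + (if k < n then \<rho>^(n-1-k) else 0)"
      by (simp add: S_def)
    show ?case
    proof (cases "k < n")
      case True
      then have e: "Suc n - 1 - k = Suc (n - 1 - k)" by simp
      have "(1-\<rho>) * (S + \<rho>^(n-1-k)) = (1-\<rho>) * S + \<rho>^(n-1-k) - \<rho> * \<rho>^(n-1-k)" by algebra
      also have "\<dots> = 1 - \<rho>^(n-1-k) + \<rho>^(n-1-k) - \<rho> * \<rho>^(n-1-k)" using Suc.IH True by (simp add: S_def)
      also have "\<dots> = 1 - \<rho>^(Suc n-1-k)" unfolding e by simp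
      finally show ?thesis using e1 True by simp
    next
      case False
      then have "S = 0" using Suc.IH by (simp add: S_def)
      then show ?thesis using e1 False by (cases "k = n") auto
    qed
  qed
  have "(if k < n then 1 - \<rho>^(n-1-k) else 0) \<le> 1" using assms by simp
  then show ?thesis using eq assms by (simp add: field_simps)
qed

lemma geo3:
  fixes x :: real assumes "0 \<le> x" "x < 1"
  shows "(\<Sum>t\<in>{1..T}. x^t) \<le> 1/(1-x)"
proof -
  have "(\<Sum>t\<in>{1..T}. x^t) \<le> (\<Sum>t<Suc T. x^t)"
    by (rule sum_mono2) (use assms in auto)
  also have "\<dots> = (1 - x^Suc T)/(1-x)" by (simp only: sum_gp_strict) (use assms in simp)
  also have "\<dots> \<le> 1/(1-x)" using assms by (intro divide_right_mono) auto
  finally show ?thesis .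
qed

definition qpow :: "real^'n^'n \<Rightarrow> nat \<Rightarrow> real^'n^'n" where
  "qpow Q m = ((**) Q ^^ m) (mat 1)"

definition Ef :: "real^'n^'n \<Rightarrow> nat \<Rightarrow> (nat \<Rightarrow> real^'n) \<Rightarrow> real^'n" where
  "Ef Q t z = (\<Sum>k<t. qpow Q (t - 1 - k) *v z k)"

lemma qpow_0: "qpow Q 0 *v v = v" by (simp add: qpow_def)

lemma qpow_Suc: "qpow Q (Suc m) *v v = Q *v (qpow Q m *v v)"
  by (simp add: qpow_def matrix_vector_mul_assoc)

lemma qpow_norm:
  assumes "\<And>v. norm (Q *v v) \<le> \<rho> * norm v" "0 \<le> \<rho>"
  shows "norm (qpow Q m *v v) \<le> \<rho>^m * norm v"
proof (induction m)
  case 0 then show ?case by (simp add: qpow_0)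
next
  case (Suc m)
  have "norm (qpow Q (Suc m) *v v) \<le> \<rho> * norm (qpow Q m *v v)" unfolding qpow_Suc by (rule assms(1))
  also have "\<dots> \<le> \<rho> * (\<rho>^m * norm v)" by (intro mult_left_mono Suc.IH assms(2))
  finally show ?case by simp
qed

lemma mv_sum: "A *v (\<Sum>k\<in>K. f k) = (\<Sum>k\<in>K. A *v f k)"
  by (induction K rule: infinite_finite_induct) (auto simp: matrix_vector_right_distrib)

lemma Ef_Suc: "Ef Q (Suc t) z = Q *v Ef Q t z + z t"
proof -
  have "Ef Q (Suc t) z = (\<Sum>k<t. qpow Q (t - k) *v z k) + z t"
    by (simp add: Ef_def qpow_0)
  also have "(\<Sum>k<t. qpow Q (t - k) *v z k) = Q *v Ef Q t z"
    unfolding Ef_def mv_sum by (intro sum.cong refl) (auto simp: Suc_diff_Suc qpow_Suc[symmetric])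
  finally show ?thesis .
qed

lemma Ef_diff: "Ef Q t z1 - Ef Q t z2 = Ef Q t (\<lambda>k. z1 k - z2 k)"
  unfolding Ef_def by (simp add: sum_subtractf matrix_vector_mult_diff_distrib)

lemma Ef_cong: "(\<And>k. k < t \<Longrightarrow> z1 k = z2 k) \<Longrightarrow> Ef Q t z1 = Ef Q t z2"
  unfolding Ef_def by (intro sum.cong) auto

lemma Ef_norm:
  assumes "\<And>v. norm (Q *v v) \<le> \<rho> * norm v" "0 \<le> \<rho>"
  shows "norm (Ef Q t z) \<le> (\<Sum>k<t. \<rho>^(t-1-k) * norm (z k))"
  unfolding Ef_def by (rule order.trans[OF norm_sum]) (intro sum_mono qpow_norm assms)

lemma Ef_bound:
  assumes "\<And>v. norm (Q *v v) \<le> \<rho> * norm v" "0 \<le> \<rho>" "\<rho> < 1" "\<And>k. k < t \<Longrightarrow> norm (z k) \<le> s"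
    and s: "0 \<le> s"
  shows "norm (Ef Q t z) \<le> s / (1 - \<rho>)"
proof -
  have "norm (Ef Q t z) \<le> (\<Sum>k<t. \<rho>^(t-1-k) * s)"
    by (rule order.trans[OF Ef_norm[OF assms(1,2)]]) (intro sum_mono mult_left_mono assms(4), auto simp: assms(2))
  also have "\<dots> = s * (\<Sum>k<t. \<rho>^(t-1-k))" by (simp add: sum_distrib_left mult.commute)
  also have "\<dots> \<le> s * (1/(1-\<rho>))"
    by (rule mult_left_mono[OF geo1[OF assms(2,3)] s])
  finally show ?thesis by simp
qed


definition clip :: "real \<Rightarrow> real^'n \<Rightarrow> real^'n" where
  "clip s v = (if norm v \<le> s then v else 0)"

lemma clip_norm: "0 \<le> s \<Longrightarrow> norm (clip s v) \<le> s"
  by (simp add: clip_def)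

lemma clip_id: "norm v \<le> s \<Longrightarrow> clip s v = v"
  by (simp add: clip_def)

lemma clip_meas[measurable]: "clip s \<in> borel_measurable borel"
  unfolding clip_def by measurable

definition Gf :: "real^'n^'n \<Rightarrow> real \<Rightarrow> nat \<Rightarrow> (nat \<Rightarrow> real^'n) \<Rightarrow> real" where
  "Gf Q s T z = (1/real T) * (\<Sum>t\<in>{1..T}. (norm (Ef Q t (\<lambda>k. clip s (z k))))\<^sup>2)"

locale contr =
  fixes Q :: "real^'n^'n" and \<rho> s :: real and T :: nat
  assumes Qn: "\<And>v. norm (Q *v v) \<le> \<rho> * norm v" and r0: "0 \<le> \<rho>" and r1: "\<rho> < 1"
    and s0: "0 < s" and T1: "1 \<le> T"
begin

lemma Ef_clip: "norm (Ef Q t (\<lambda>k. clip s (z k))) \<le> s / (1 - \<rho>)"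
  by (rule Ef_bound[OF Qn r0 r1 clip_norm]) (use s0 in auto)

lemma Gf_bound: "\<bar>Gf Q s T z\<bar> \<le> (s/(1-\<rho>))\<^sup>2"
proof -
  have "0 \<le> Gf Q s T z" unfolding Gf_def by (intro mult_nonneg_nonneg sum_nonneg) auto
  moreover have "(\<Sum>t\<in>{1..T}. (norm (Ef Q t (\<lambda>k. clip s (z k))))\<^sup>2) \<le> (\<Sum>t\<in>{1..T}. (s/(1-\<rho>))\<^sup>2)"
    by (intro sum_mono power_mono Ef_clip) auto
  then have "Gf Q s T z \<le> (1/real T) * (real T * (s/(1-\<rho>))\<^sup>2)"
    unfolding Gf_def by (intro mult_left_mono) auto
  ultimately show ?thesis using T1 by simp
qed

lemma sq_diff_le: "\<bar>(norm u)\<^sup>2 - (norm v)\<^sup>2\<bar> \<le> norm (u - v) * (norm u + norm (v::'a::real_normed_vector))"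
proof -
  have "(norm u)\<^sup>2 - (norm v)\<^sup>2 = (norm u + norm v) * (norm u - norm v)"
    by (simp add: power2_eq_square algebra_simps)
  then have "\<bar>(norm u)\<^sup>2 - (norm v)\<^sup>2\<bar> = \<bar>norm u - norm v\<bar> * (norm u + norm v)"
    by (simp add: abs_mult)
  also have "\<dots> \<le> norm (u - v) * (norm u + norm v)"
    by (intro mult_right_mono norm_triangle_ineq3) auto
  finally show ?thesis .
qed

lemma Gf_diff: "\<bar>Gf Q s T z - Gf Q s T (z(k:=y))\<bar> \<le> 4 * s\<^sup>2 / ((1-\<rho>)\<^sup>2 * real T)"
proof -
  define u where "u t = Ef Q t (\<lambda>j. clip s (z j))" for t
  define v where "v t = Ef Q t (\<lambda>j. clip s ((z(k:=y)) j))" for t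
  have uv: "norm (u t - v t) \<le> 2 * s * (if k < t then \<rho>^(t-1-k) else 0)" for t
  proof -
    have "norm (u t - v t) = norm (Ef Q t (\<lambda>j. clip s (z j) - clip s ((z(k:=y)) j)))"
      unfolding u_def v_def Ef_diff ..
    also have "\<dots> \<le> (\<Sum>j<t. \<rho>^(t-1-j) * norm (clip s (z j) - clip s ((z(k:=y)) j)))"
      by (rule Ef_norm[OF Qn r0])
    also have "\<dots> \<le> (\<Sum>j<t. if j = k then \<rho>^(t-1-j) * (2 * s) else 0)"
    proof (rule sum_mono)
      fix j assume "j \<in> {..<t}"
      show "\<rho>^(t-1-j) * norm (clip s (z j) - clip s ((z(k:=y)) j)) \<le> (if j = k then \<rho>^(t-1-j) * (2 * s) else 0)"
      proof (cases "j = k")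
        case True
        have "norm (clip s (z j) - clip s y) \<le> norm (clip s (z j)) + norm (clip s y)" by (rule norm_triangle_ineq4)
        also have "\<dots> \<le> 2 * s" using clip_norm[of s] s0 by (smt (verit))
        finally show ?thesis using True r0 by (simp add: mult_left_mono)
      qed simp
    qed
    also have "\<dots> = (if k < t then \<rho>^(t-1-k) * (2 * s) else 0)"
      by (simp add: sum.delta)
    finally show ?thesis by (cases "k < t") (auto simp: mult_ac)
  qed
  have "\<bar>Gf Q s T z - Gf Q s T (z(k:=y))\<bar> = (1/real T) * \<bar>\<Sum>t\<in>{1..T}. (norm (u t))\<^sup>2 - (norm (v t))\<^sup>2\<bar>"
    unfolding Gf_def u_def v_def by (simp add: sum_subtractf abs_divide flip: diff_divide_distrib)
  also have "\<dots> \<le> (1/real T) * (\<Sum>t\<in>{1..T}. 2 * s * (if k < t then \<rho>^(t-1-k) else 0) * (2 * s / (1 - \<rho>)))"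
  proof (intro mult_left_mono order.trans[OF sum_abs] sum_mono)
    fix t assume "t \<in> {1..T}"
    have "\<bar>(norm (u t))\<^sup>2 - (norm (v t))\<^sup>2\<bar> \<le> norm (u t - v t) * (norm (u t) + norm (v t))" by (rule sq_diff_le)
    also have "\<dots> \<le> 2 * s * (if k < t then \<rho>^(t-1-k) else 0) * (2 * s / (1 - \<rho>))"
    proof (rule mult_mono[OF uv])
      show "norm (u t) + norm (v t) \<le> 2 * s / (1 - \<rho>)" using Ef_clip[of t z] Ef_clip[of t "z(k:=y)"]
        unfolding u_def v_def by simp
    qed (use s0 r0 in auto)
    finally show "\<bar>(norm (u t))\<^sup>2 - (norm (v t))\<^sup>2\<bar> \<le> 2 * s * (if k < t then \<rho>^(t-1-k) else 0) * (2 * s / (1 - \<rho>))" .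
  qed auto
  also have "\<dots> = (1/real T) * (4 * s\<^sup>2 / (1 - \<rho>)) * (\<Sum>t\<in>{1..T}. (if k < t then \<rho>^(t-1-k) else 0))"
    by (simp add: sum_distrib_left power2_eq_square algebra_simps)
  also have "\<dots> \<le> (1/real T) * (4 * s\<^sup>2 / (1 - \<rho>)) * (1 / (1 - \<rho>))"
  proof (intro mult_left_mono)
    have "(\<Sum>t\<in>{1..T}. (if k < t then \<rho>^(t-1-k) else 0)) \<le> (\<Sum>t<Suc T. (if k < t then \<rho>^(t-1-k) else 0))"
      by (rule sum_mono2) (use r0 in auto)
    also have "\<dots> \<le> 1 / (1 - \<rho>)" by (rule geo2[OF r0 r1])
    finally show "(\<Sum>t\<in>{1..T}. (if k < t then \<rho>^(t-1-k) else 0)) \<le> 1 / (1 - \<rho>)" .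
  qed (use r1 in auto)
  also have "\<dots> = 4 * s\<^sup>2 / ((1-\<rho>)\<^sup>2 * real T)"
    by (simp add: power2_eq_square)
  finally show ?thesis .
qed

lemma Gf_meas: "Gf Q s T \<in> borel_measurable (PiM {..<T} (\<lambda>_. borel))"
proof -
  have c: "(\<lambda>z. qpow Q m *v clip s (z k)) \<in> borel_measurable (PiM {..<T} (\<lambda>_. borel))" if "k < T" for k m
  proof -
    have "(\<lambda>z. z k) \<in> measurable (PiM {..<T} (\<lambda>_. borel)) borel"
      using that by (intro measurable_component_singleton) auto
    then show ?thesis by measurable
  qed
  have e: "(\<lambda>z. Ef Q t (\<lambda>k. clip s (z k))) \<in> borel_measurable (PiM {..<T} (\<lambda>_. borel))" if "t \<le> T" for t
    unfolding Ef_def by (rule borel_measurable_sum) (use c that in auto)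
  have e2: "(\<lambda>z. (norm (Ef Q t (\<lambda>k. clip s (z k))))\<^sup>2) \<in> borel_measurable (PiM {..<T} (\<lambda>_. borel))" if "t \<le> T" for t
    using e[OF that] by measurable
  show ?thesis unfolding Gf_def
    by (intro borel_measurable_times borel_measurable_const borel_measurable_sum e2) auto
qed

end



lemma (in prob_space) indep_pair_comp:
  assumes ind: "indep_vars (\<lambda>_. borel) X UNIV" and jk: "j \<noteq> k"
    and f: "f \<in> borel_measurable borel" and g: "g \<in> borel_measurable borel"
  shows "indep_var borel (\<lambda>\<omega>. f (X j \<omega>)) borel (\<lambda>\<omega>. g (X k \<omega>))"
proof -
  have iv: "indep_var (PiM {j} (\<lambda>_. borel)) (\<lambda>\<omega>. restrict (\<lambda>i. X i \<omega>) {j}) (PiM {k} (\<lambda>_. borel)) (\<lambda>\<omega>. restrict (\<lambda>i. X i \<omega>) {k})"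
    by (rule indep_var_restrict[OF ind]) (use jk in auto)
  have m1: "(\<lambda>h. f (h j)) \<in> measurable (PiM {j} (\<lambda>_. borel)) borel"
    using measurable_comp[OF measurable_component_singleton[of j "{j}" "\<lambda>_. borel"] f] by (simp add: comp_def)
  have m2: "(\<lambda>h. g (h k)) \<in> measurable (PiM {k} (\<lambda>_. borel)) borel"
    using measurable_comp[OF measurable_component_singleton[of k "{k}" "\<lambda>_. borel"] g] by (simp add: comp_def)
  show ?thesis using indep_var_compose[OF iv m1 m2] by (simp add: comp_def)
qed

lemma (in prob_space) mean_mat:
  assumes "sqv M X" "\<And>i. (\<integral>\<omega>. X \<omega> $ i \<partial>M) = 0"
  shows "(\<integral>\<omega>. (A *v X \<omega>) $ i \<partial>M) = 0"
  using sqv_mat_integral[OF prob_space_axioms assms(1)] assms(2) by simp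

lemma (in prob_space) orth:
  assumes ind: "indep_vars (\<lambda>_. borel) X UNIV" and jk: "j \<noteq> k"
    and sq: "\<And>k. sqv M (X k)" and mean: "\<And>k i. (\<integral>\<omega>. X k \<omega> $ i \<partial>M) = 0"
  shows "(\<integral>\<omega>. inner (A *v X j \<omega>) (B *v X k \<omega>) \<partial>M) = 0"
proof -
  have sa: "sqv M (\<lambda>\<omega>. A *v X j \<omega>)" and sb: "sqv M (\<lambda>\<omega>. B *v X k \<omega>)"
    by (intro sqv_mat[OF prob_space_axioms] sq)+
  have "(\<integral>\<omega>. inner (A *v X j \<omega>) (B *v X k \<omega>) \<partial>M) = (\<Sum>i\<in>UNIV. \<integral>\<omega>. (A *v X j \<omega>) $ i * (B *v X k \<omega>) $ i \<partial>M)"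
    by (rule sqv_inner_int(2)[OF sa sb])
  also have "\<dots> = (\<Sum>i\<in>UNIV. (\<integral>\<omega>. (A *v X j \<omega>) $ i \<partial>M) * (\<integral>\<omega>. (B *v X k \<omega>) $ i \<partial>M))"
  proof (intro sum.cong refl indep_var_lebesgue_integral)
    fix i
    show "indep_var borel (\<lambda>\<omega>. (A *v X j \<omega>) $ i) borel (\<lambda>\<omega>. (B *v X k \<omega>) $ i)"
      by (rule indep_pair_comp[OF ind jk]) measurable
    show "integrable M (\<lambda>\<omega>. (A *v X j \<omega>) $ i)" by (rule sqv_int[OF prob_space_axioms sa])
    show "integrable M (\<lambda>\<omega>. (B *v X k \<omega>) $ i)" by (rule sqv_int[OF prob_space_axioms sb])
  qed
  also have "\<dots> = 0"
  proof -
    have z: "(\<integral>\<omega>. (B *v X k \<omega>) $ i \<partial>M) = 0" for i by (rule mean_mat[where X="X k"]) (use sq mean in auto)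
    show ?thesis by (simp add: z)
  qed
  finally show ?thesis .
qed

lemma sqv_norm_int: "sqv M X \<Longrightarrow> integrable M (\<lambda>\<omega>. (norm (X \<omega>))\<^sup>2)"
  unfolding power2_norm_eq_inner by (rule sqv_inner_int(1))

lemma (in prob_space) sum_orth:
  assumes ind: "indep_vars (\<lambda>_. borel) X UNIV"
    and sq: "\<And>k. sqv M (X k)" and mean: "\<And>k i. (\<integral>\<omega>. X k \<omega> $ i \<partial>M) = 0"
    and K: "finite K"
  shows "(\<integral>\<omega>. (norm (\<Sum>k\<in>K. A k *v X k \<omega>))\<^sup>2 \<partial>M) = (\<Sum>k\<in>K. \<integral>\<omega>. (norm (A k *v X k \<omega>))\<^sup>2 \<partial>M)"
  using K
proof (induction K rule: finite_induct)
  case empty then show ?case by simp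
next
  case (insert j F)
  have sm: "sqv M (\<lambda>\<omega>. A k *v X k \<omega>)" for k by (intro sqv_mat[OF prob_space_axioms] sq)
  define a where "a \<omega> = A j *v X j \<omega>" for \<omega>
  define b where "b \<omega> = (\<Sum>k\<in>F. A k *v X k \<omega>)" for \<omega>
  have sa: "sqv M a" unfolding a_def by (rule sm)
  have sb: "sqv M b" unfolding b_def by (intro sqv_sum[OF prob_space_axioms] sm)
  have "(\<integral>\<omega>. inner (a \<omega>) (b \<omega>) \<partial>M) = (\<integral>\<omega>. (\<Sum>k\<in>F. inner (a \<omega>) (A k *v X k \<omega>)) \<partial>M)"
    unfolding b_def by (simp add: inner_sum_right)
  also have "\<dots> = (\<Sum>k\<in>F. \<integral>\<omega>. inner (a \<omega>) (A k *v X k \<omega>) \<partial>M)"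
    by (subst Bochner_Integration.integral_sum) (auto intro!: sqv_inner_int(1) sa sm)
  also have "\<dots> = 0" unfolding a_def using insert(2)
    by (intro sum.neutral ballI orth[OF ind _ sq mean]) auto
  finally have ab: "(\<integral>\<omega>. inner (a \<omega>) (b \<omega>) \<partial>M) = 0" .
  have "(\<integral>\<omega>. (norm (\<Sum>k\<in>insert j F. A k *v X k \<omega>))\<^sup>2 \<partial>M) = (\<integral>\<omega>. (norm (a \<omega>))\<^sup>2 + 2 * inner (a \<omega>) (b \<omega>) + (norm (b \<omega>))\<^sup>2 \<partial>M)"
    using insert(1,2) unfolding a_def b_def
    by (intro Bochner_Integration.integral_cong refl) (simp add: power2_norm_eq_inner inner_add_left inner_add_right inner_commute algebra_simps)
  also have "\<dots> = (\<integral>\<omega>. (norm (a \<omega>))\<^sup>2 \<partial>M) + 2 * (\<integral>\<omega>. inner (a \<omega>) (b \<omega>) \<partial>M) + (\<integral>\<omega>. (norm (b \<omega>))\<^sup>2 \<partial>M)"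
    using sqv_norm_int[OF sa] sqv_norm_int[OF sb] sqv_inner_int(1)[OF sa sb] by simp
  also have "\<dots> = (\<Sum>k\<in>insert j F. \<integral>\<omega>. (norm (A k *v X k \<omega>))\<^sup>2 \<partial>M)"
    using insert ab unfolding a_def b_def by simp
  finally show ?case .
qed

lemma (in prob_space) norm_mat_cov:
  assumes sq: "sqv M X"
  shows "(\<integral>\<omega>. (norm (A *v X \<omega>))\<^sup>2 \<partial>M) = (\<Sum>i\<in>UNIV. \<Sum>p\<in>UNIV. \<Sum>q\<in>UNIV. A$i$p * A$i$q * second_moment M X $ p $ q)"
proof -
  have sm: "sqv M (\<lambda>\<omega>. A *v X \<omega>)" by (rule sqv_mat[OF prob_space_axioms sq])
  have pq: "integrable M (\<lambda>\<omega>. X \<omega> $ p * X \<omega> $ q)" for p q using sq unfolding sqv_def by (auto intro: sqi_mult)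
  have "(\<integral>\<omega>. (norm (A *v X \<omega>))\<^sup>2 \<partial>M) = (\<Sum>i\<in>UNIV. \<integral>\<omega>. (A *v X \<omega>) $ i * (A *v X \<omega>) $ i \<partial>M)"
    unfolding power2_norm_eq_inner by (rule sqv_inner_int(2)[OF sm sm])
  also have "\<dots> = (\<Sum>i\<in>UNIV. \<integral>\<omega>. (\<Sum>p\<in>UNIV. \<Sum>q\<in>UNIV. A$i$p * A$i$q * (X \<omega> $ p * X \<omega> $ q)) \<partial>M)"
    by (intro sum.cong refl integral_cong) (simp add: matrix_vector_mult_def sum_product algebra_simps)
  also have "\<dots> = (\<Sum>i\<in>UNIV. \<Sum>p\<in>UNIV. \<Sum>q\<in>UNIV. A$i$p * A$i$q * (\<integral>\<omega>. X \<omega> $ p * X \<omega> $ q \<partial>M))"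
    using pq by (simp add: Bochner_Integration.integral_sum)
  finally show ?thesis by (simp add: second_moment_def)
qed



theorem theorem2:
  fixes M :: "'w measure"
    and P :: "real^'n^'n" and a \<alpha> s \<delta> \<sigma>r \<sigma>w :: real and T :: nat
    and x :: "nat \<Rightarrow> 'w \<Rightarrow> real" and r :: "nat \<Rightarrow> 'w \<Rightarrow> real"
    and w :: "nat \<Rightarrow> 'w \<Rightarrow> real^'n" and xe :: "nat \<Rightarrow> 'w \<Rightarrow> real^'n"
    and sn :: "nat \<Rightarrow> 'w \<Rightarrow> real^'n" and \<xi>0 :: "real^'n"
    and S \<Sigma> :: "real^'n^'n"
  defines "Q \<equiv> a *\<^sub>R (P - \<alpha> *\<^sub>R mat 1)"
    and "y \<equiv> (\<lambda>t \<omega>. (\<chi> i. x t \<omega>) + w t \<omega>)"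
    and "\<xi> \<equiv> (\<lambda>t \<omega>. xe t \<omega> - x t \<omega> *\<^sub>R (1::real^'n))"
    and "\<rho> \<equiv> spectral_radius (a *\<^sub>R (P - \<alpha> *\<^sub>R mat 1))"
  assumes N2: "CARD('n) \<ge> 2"
    and alpha: "0 < \<alpha>" "\<alpha> \<le> 1"
    and Psym: "transpose P = P"
    and Pds: "doubly_stochastic P"
    and Peig: "\<forall>c. real_eigenvalue P c \<longrightarrow> -1 < c \<and> c \<le> 1"
    and Peig1: "dim {v. P *v v = v} = 1"
    and rho: "\<rho> < 1"
    and M: "prob_space M"
    and state: "\<forall>t \<omega>. x (Suc t) \<omega> = a * x t \<omega> + r t \<omega>"
    and est: "((\<forall>t \<omega>. xe (Suc t) \<omega> = a *\<^sub>R (P *v xe t \<omega> + \<alpha> *\<^sub>R (y t \<omega> - xe t \<omega>))) \<and>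
               (\<forall>t \<omega>. sn t \<omega> = (\<alpha> * a) *\<^sub>R w t \<omega> - r t \<omega> *\<^sub>R (1::real^'n)))
            \<or> ((\<forall>t \<omega>. xe (Suc t) \<omega> = a *\<^sub>R (P *v xe t \<omega> + \<alpha> *\<^sub>R (P *v y t \<omega> - xe t \<omega>))) \<and>
               (\<forall>t \<omega>. sn t \<omega> = (\<alpha> * a) *\<^sub>R (P *v w t \<omega>) - r t \<omega> *\<^sub>R (1::real^'n)))"
    and init: "\<forall>\<omega>\<in>space M. \<xi> 0 \<omega> = \<xi>0"
    and r_meas: "\<forall>t. r t \<in> borel_measurable M"
    and w_meas: "\<forall>t. w t \<in> borel_measurable M"
    and r_int: "\<forall>t. integrable M (\<lambda>\<omega>. (r t \<omega>)\<^sup>2)"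
    and w_int: "\<forall>t i. integrable M (\<lambda>\<omega>. (w t \<omega> $ i)\<^sup>2)"
    and r_mean: "\<forall>t. integral\<^sup>L M (r t) = 0"
    and r_var: "\<forall>t. integral\<^sup>L M (\<lambda>\<omega>. (r t \<omega>)\<^sup>2) = \<sigma>r\<^sup>2"
    and w_mean: "\<forall>t i. integral\<^sup>L M (\<lambda>\<omega>. w t \<omega> $ i) = 0"
    and w_var: "\<forall>t i. integral\<^sup>L M (\<lambda>\<omega>. (w t \<omega> $ i)\<^sup>2) = \<sigma>w\<^sup>2"
    and w_indep: "\<forall>t. prob_space.indep_vars M (\<lambda>_. borel) (\<lambda>i \<omega>. w t \<omega> $ i) UNIV"
    and rw_uncorr: "\<forall>t i. integral\<^sup>L M (\<lambda>\<omega>. r t \<omega> * w t \<omega> $ i) = 0"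
    and s_indep: "prob_space.indep_vars M (\<lambda>_. borel) sn UNIV"
    and s_mean: "\<forall>t i. integral\<^sup>L M (\<lambda>\<omega>. sn t \<omega> $ i) = 0"
    and s_cov: "\<forall>t. second_moment M (sn t) = S"
    and s_pos: "s > 0"
    and s_bound: "AE \<omega> in M. \<forall>t\<le>T. norm (sn t \<omega>) \<le> s"
    and Sigma: "(\<lambda>t. second_moment M (\<xi> t)) \<longlonglongrightarrow> \<Sigma>"
    and T: "T \<ge> 1"
    and delta: "0 < \<delta>" "\<delta> < 1"
  shows "measure M {\<omega> \<in> space M.
           (1 / real CARD('n)) * mtrace ((1 / real T) *\<^sub>R (\<Sum>t\<in>{1..T}. outer (\<xi> t \<omega>)) - \<Sigma>)
           \<le> 1 / real T * ((norm \<xi>0)\<^sup>2 / (1 - \<rho>\<^sup>2))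
            + 1 / real T * (2 * s * norm \<xi>0 / (1 - \<rho>)\<^sup>2)
            + 1 / real T * (s\<^sup>2 / (1 - \<rho>\<^sup>2)\<^sup>2)
            + 1 / sqrt (real T) * (8 * s\<^sup>2 * sqrt (2 * ln (real CARD('n) / \<delta>)) / (1 - \<rho>)\<^sup>2)}
         \<ge> 1 - \<delta>"
proof -
  interpret prob_space M by (rule M)
  define N where "N = CARD('n)"
  have Pij: "P$j$i = P$i$j" for i j using arg_cong[OF Psym, of "\<lambda>A. A$i$j"] by (simp add: transpose_def)
  have Qsym: "transpose Q = Q"
    unfolding Q_def by (simp add: vec_eq_iff transpose_def mat_def Pij)
  have rhoQ: "\<rho> = spectral_radius Q" unfolding \<rho>_def Q_def ..
  have Qn: "\<And>v. norm (Q *v v) \<le> \<rho> * norm v" and r0: "0 \<le> \<rho>"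
    using spectral_norm[OF Qsym] rhoQ by auto
  have r1: "\<rho> < 1" by (rule rho)
  interpret C: contr Q \<rho> s T by standard (use Qn r0 r1 s_pos T in auto)
  have P1: "P *v (1::real^'n) = 1"
    using Pds by (simp add: doubly_stochastic_def vec_eq_iff matrix_vector_mult_def)
  have Qv: "Q *v v = a *\<^sub>R (P *v v - \<alpha> *\<^sub>R v)" for v
    unfolding Q_def by (simp add: scaleR_matrix_vector_assoc[symmetric] matrix_vector_mult_diff_rdistrib
        scaleR_matrix_vector_assoc[of \<alpha> "mat 1", symmetric])
  have chi: "(\<chi> i. c) = c *\<^sub>R (1::real^'n)" for c :: real by (simp add: vec_eq_iff)
  have rec: "\<xi> (Suc t) \<omega> = Q *v \<xi> t \<omega> + sn t \<omega>" for t \<omega>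
    using est
  proof (elim disjE conjE)
    assume e1: "\<forall>t \<omega>. xe (Suc t) \<omega> = a *\<^sub>R (P *v xe t \<omega> + \<alpha> *\<^sub>R (y t \<omega> - xe t \<omega>))"
      and e2: "\<forall>t \<omega>. sn t \<omega> = (\<alpha> * a) *\<^sub>R w t \<omega> - r t \<omega> *\<^sub>R (1::real^'n)"
    show ?thesis
      unfolding \<xi>_def e1[rule_format] e2[rule_format] state[rule_format] Qv y_def chi
      by (simp add: matrix_vector_mult_diff_distrib matrix_vector_mult_scaleR P1 algebra_simps)
  next
    assume e1: "\<forall>t \<omega>. xe (Suc t) \<omega> = a *\<^sub>R (P *v xe t \<omega> + \<alpha> *\<^sub>R (P *v y t \<omega> - xe t \<omega>))"
      and e2: "\<forall>t \<omega>. sn t \<omega> = (\<alpha> * a) *\<^sub>R (P *v w t \<omega>) - r t \<omega> *\<^sub>R (1::real^'n)"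
    show ?thesis
      unfolding \<xi>_def e1[rule_format] e2[rule_format] state[rule_format] Qv y_def chi
      by (simp add: matrix_vector_mult_diff_distrib matrix_vector_right_distrib matrix_vector_mult_scaleR P1 algebra_simps)
  qed
  have closed: "\<xi> t \<omega> = qpow Q t *v \<xi>0 + Ef Q t (\<lambda>k. sn k \<omega>)" if \<omega>: "\<omega> \<in> space M" for t \<omega>
  proof (induction t)
    case 0 then show ?case using init \<omega> by (simp add: qpow_0 Ef_def)
  next
    case (Suc t)
    show ?case unfolding rec Suc Ef_Suc qpow_Suc by (simp add: matrix_vector_right_distrib)
  qed
  have snm: "sn k \<in> borel_measurable M" for k using s_indep unfolding indep_vars_def by blast
  have sq_w: "sqv M (w k)" for k
    unfolding sqv_def sqi_def using w_meas w_int by (auto intro: vnth_meas)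
  have sq_r: "sqi M (r k)" for k unfolding sqi_def using r_meas r_int by auto
  have sq_sn: "sqv M (sn k)" for k
    using est
  proof (elim disjE conjE)
    assume e2: "\<forall>t \<omega>. sn t \<omega> = (\<alpha> * a) *\<^sub>R w t \<omega> - r t \<omega> *\<^sub>R (1::real^'n)"
    have "sn k = (\<lambda>\<omega>. (\<alpha> * a) *\<^sub>R w k \<omega> - r k \<omega> *\<^sub>R 1)" using e2 by auto
    then show ?thesis by (simp add: sqv_diff sqv_scaleR sq_w sqv_scale sq_r)
  next
    assume e2: "\<forall>t \<omega>. sn t \<omega> = (\<alpha> * a) *\<^sub>R (P *v w t \<omega>) - r t \<omega> *\<^sub>R (1::real^'n)"
    have "sn k = (\<lambda>\<omega>. (\<alpha> * a) *\<^sub>R (P *v w k \<omega>) - r k \<omega> *\<^sub>R 1)" using e2 by auto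
    then show ?thesis by (simp add: sqv_diff sqv_scaleR sqv_mat[OF prob_space_axioms sq_w] sqv_scale sq_r)
  qed
  have mean_sn: "(\<integral>\<omega>. sn k \<omega> $ i \<partial>M) = 0" for k i using s_mean by auto
  define \<phi> where "\<phi> m = (\<integral>\<omega>. (norm (qpow Q m *v sn 0 \<omega>))\<^sup>2 \<partial>M)" for m
  have \<phi>0: "0 \<le> \<phi> m" for m unfolding \<phi>_def by (rule Bochner_Integration.integral_nonneg) simp
  have phik: "(\<integral>\<omega>. (norm (qpow Q m *v sn k \<omega>))\<^sup>2 \<partial>M) = \<phi> m" for k m
    unfolding \<phi>_def using norm_mat_cov[OF sq_sn[of k], of "qpow Q m"] norm_mat_cov[OF sq_sn[of 0], of "qpow Q m"] s_cov
    by (simp del: norm_mat_cov)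
  have Eint: "(\<integral>\<omega>. (norm (Ef Q t (\<lambda>k. sn k \<omega>)))\<^sup>2 \<partial>M) = (\<Sum>j<t. \<phi> j)" for t
  proof -
    have "(\<integral>\<omega>. (norm (Ef Q t (\<lambda>k. sn k \<omega>)))\<^sup>2 \<partial>M) = (\<Sum>k<t. \<integral>\<omega>. (norm (qpow Q (t-1-k) *v sn k \<omega>))\<^sup>2 \<partial>M)"
      unfolding Ef_def by (rule sum_orth[OF s_indep sq_sn mean_sn]) simp
    also have "\<dots> = (\<Sum>k<t. \<phi> (t - Suc k))" by (simp add: phik)
    also have "\<dots> = (\<Sum>j<t. \<phi> j)" by (rule sum.nat_diff_reindex)
    finally show ?thesis .
  qed
  have sq_e: "sqv M (\<lambda>\<omega>. Ef Q t (\<lambda>k. sn k \<omega>))" for t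
    unfolding Ef_def by (intro sqv_sum[OF prob_space_axioms] sqv_mat[OF prob_space_axioms] sq_sn)
  have mean_e: "(\<integral>\<omega>. Ef Q t (\<lambda>k. sn k \<omega>) $ i \<partial>M) = 0" for t i
  proof -
    have z: "(\<integral>\<omega>. (qpow Q m *v sn k \<omega>) $ i \<partial>M) = 0" for m k
      by (rule mean_mat[OF sq_sn mean_sn])
    show ?thesis unfolding Ef_def sum_component
      by (subst Bochner_Integration.integral_sum) (auto intro!: sqv_int[OF prob_space_axioms] sqv_mat[OF prob_space_axioms] sq_sn simp: z)
  qed
  have em: "(\<lambda>\<omega>. Ef Q t (\<lambda>k. sn k \<omega>)) \<in> borel_measurable M" for t
    unfolding Ef_def by (intro borel_measurable_sum mv_meas snm)
  have trbound: "(\<Sum>j<t. \<phi> j) \<le> mtrace \<Sigma>" for t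
  proof -
    have lim: "(\<lambda>t'. mtrace (second_moment M (\<xi> t'))) \<longlonglongrightarrow> mtrace \<Sigma>"
      unfolding mtrace_def by (intro tendsto_intros Sigma)
    have ge: "(\<Sum>j<t'. \<phi> j) \<le> mtrace (second_moment M (\<xi> t'))" for t'
    proof -
      define c where "c = qpow Q t' *v \<xi>0"
      define e where "e \<omega> = Ef Q t' (\<lambda>k. sn k \<omega>)" for \<omega>
      have se: "sqv M e" unfolding e_def by (rule sq_e)
      have sce: "sqv M (\<lambda>\<omega>. c + e \<omega>)" by (intro sqv_add sqv_const[OF prob_space_axioms] se)
      have "mtrace (second_moment M (\<xi> t')) = (\<Sum>i\<in>UNIV. \<integral>\<omega>. (c + e \<omega>)$i * (c + e \<omega>)$i \<partial>M)"
        unfolding mtrace_def second_moment_def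
        by (auto intro!: sum.cong Bochner_Integration.integral_cong simp: c_def e_def closed)
      also have "\<dots> = (\<integral>\<omega>. inner (c + e \<omega>) (c + e \<omega>) \<partial>M)"
        by (rule sqv_inner_int(2)[OF sce sce, symmetric])
      also have "\<dots> = (\<integral>\<omega>. inner c c + 2 * inner c (e \<omega>) + (norm (e \<omega>))\<^sup>2 \<partial>M)"
        by (intro Bochner_Integration.integral_cong refl)
          (simp add: inner_add_left inner_add_right inner_commute power2_norm_eq_inner)
      also have "\<dots> = inner c c + 2 * (\<integral>\<omega>. inner c (e \<omega>) \<partial>M) + (\<integral>\<omega>. (norm (e \<omega>))\<^sup>2 \<partial>M)"
        using sqv_inner_int(1)[OF sqv_const[OF prob_space_axioms] se, of c] sqv_norm_int[OF se]
        by (simp add: prob_space)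
      also have "(\<integral>\<omega>. inner c (e \<omega>) \<partial>M) = 0"
      proof -
        have "(\<integral>\<omega>. inner c (e \<omega>) \<partial>M) = (\<Sum>i\<in>UNIV. \<integral>\<omega>. c $ i * e \<omega> $ i \<partial>M)"
          by (rule sqv_inner_int(2)[OF sqv_const[OF prob_space_axioms] se])
        also have "\<dots> = 0" using mean_e by (simp add: e_def)
        finally show ?thesis .
      qed
      also have "(\<integral>\<omega>. (norm (e \<omega>))\<^sup>2 \<partial>M) = (\<Sum>j<t'. \<phi> j)" unfolding e_def by (rule Eint)
      finally have "mtrace (second_moment M (\<xi> t')) = inner c c + (\<Sum>j<t'. \<phi> j)" by simp
      then show ?thesis by simp
    qed
    have "\<forall>t'\<ge>t. (\<Sum>j<t. \<phi> j) \<le> mtrace (second_moment M (\<xi> t'))"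
    proof (intro allI impI)
      fix t' assume "t \<le> t'"
      then have "(\<Sum>j<t. \<phi> j) \<le> (\<Sum>j<t'. \<phi> j)" by (intro sum_mono2) (auto intro: \<phi>0)
      then show "(\<Sum>j<t. \<phi> j) \<le> mtrace (second_moment M (\<xi> t'))" using ge[of t'] by linarith
    qed
    then show ?thesis by (intro LIMSEQ_le_const[OF lim]) blast
  qed
  define G where "G = Gf Q s T"
  define Z where "Z \<omega> = restrict (\<lambda>i. sn i \<omega>) {..<T}" for \<omega>
  have GZ: "G (Z \<omega>) = (1/real T) * (\<Sum>t\<in>{1..T}. (norm (Ef Q t (\<lambda>k. sn k \<omega>)))\<^sup>2)"
    if b: "\<forall>t\<le>T. norm (sn t \<omega>) \<le> s" for \<omega>
  proof -
    have "Ef Q t (\<lambda>k. clip s (Z \<omega> k)) = Ef Q t (\<lambda>k. sn k \<omega>)" if "t \<in> {1..T}" for t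
      by (rule Ef_cong) (use that b in \<open>auto simp: Z_def clip_id\<close>)
    then show ?thesis unfolding G_def Gf_def by simp
  qed
  have Zm: "Z \<in> measurable M (PiM {..<T} (\<lambda>_. borel))"
    unfolding Z_def by (intro measurable_restrict snm)
  have GZm: "(\<lambda>\<omega>. G (Z \<omega>)) \<in> borel_measurable M"
    using measurable_comp[OF Zm C.Gf_meas] by (simp add: comp_def G_def)
  define EG where "EG = (\<integral>\<omega>. G (Z \<omega>) \<partial>M)"
  have EGle: "EG \<le> mtrace \<Sigma>"
  proof -
    have "EG = (\<integral>\<omega>. (1/real T) * (\<Sum>t\<in>{1..T}. (norm (Ef Q t (\<lambda>k. sn k \<omega>)))\<^sup>2) \<partial>M)"
      unfolding EG_def
    proof (rule integral_cong_AE[OF GZm])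
      show "(\<lambda>\<omega>. (1/real T) * (\<Sum>t\<in>{1..T}. (norm (Ef Q t (\<lambda>k. sn k \<omega>)))\<^sup>2)) \<in> borel_measurable M"
        using em by measurable
      show "AE \<omega> in M. G (Z \<omega>) = (1/real T) * (\<Sum>t\<in>{1..T}. (norm (Ef Q t (\<lambda>k. sn k \<omega>)))\<^sup>2)"
        using s_bound by (rule eventually_mono) (rule GZ)
    qed
    also have "\<dots> = (1/real T) * (\<Sum>t\<in>{1..T}. \<Sum>j<t. \<phi> j)"
      using sqv_norm_int[OF sq_e] by (simp add: Bochner_Integration.integral_sum Eint)
    also have "\<dots> \<le> (1/real T) * (\<Sum>t\<in>{1..T}. mtrace \<Sigma>)"
      by (intro mult_left_mono sum_mono trbound) auto
    also have "\<dots> = mtrace \<Sigma>" using T by simp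
    finally show ?thesis .
  qed
  define Lg where "Lg = ln (real N / \<delta>)"
  have Nge: "real N \<ge> 2" using N2 by (simp add: N_def)
  have Lg1: "ln (1/\<delta>) \<le> Lg" unfolding Lg_def using delta Nge
    by (intro ln_mono) (auto simp: divide_simps)
  have Lg0: "0 < Lg" unfolding Lg_def using delta Nge by (intro ln_gt_zero) (auto simp: divide_simps)
  define D where "D = (1 - \<rho>)\<^sup>2"
  have D0: "0 < D" unfolding D_def using r1 by simp
  have sT: "0 < sqrt (real T)" using T by simp
  define K where "K = s\<^sup>2 / (D * sqrt (real T))"
  have K0: "0 < K" unfolding K_def using D0 sT s_pos by simp
  define \<epsilon> where "\<epsilon> = 8 * K * sqrt (2 * Lg)"
  define c where "c = 4 * s\<^sup>2 / (D * real T)"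
  define l where "l = \<epsilon> / (16 * K\<^sup>2)"
  have eps0: "0 < \<epsilon>" unfolding \<epsilon>_def using K0 Lg0 by simp
  have l0: "0 < l" unfolding l_def using eps0 K0 by simp
  have Tc: "real T * c\<^sup>2 = 16 * K\<^sup>2"
  proof -
    have T0: "0 < real T" using T by simp
    have "K\<^sup>2 = s^4 / (D\<^sup>2 * real T)" unfolding K_def using T0
      by (simp add: power_divide power_mult_distrib)
    moreover have "real T * c\<^sup>2 = 16 * (s^4 / (D\<^sup>2 * real T))" unfolding c_def using T0 D0
      by (simp add: power_divide power_mult_distrib power2_eq_square field_simps numeral_eq_Suc)
    ultimately show ?thesis by simp
  qed
  have expo: "- l * \<epsilon> + l\<^sup>2 * real T * c\<^sup>2 / 2 = - 4 * Lg"
  proof -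
    have "- l * \<epsilon> + l\<^sup>2 * real T * c\<^sup>2 / 2 = - l * \<epsilon> + l\<^sup>2 * (real T * c\<^sup>2) / 2" by simp
    also have "\<dots> = - l * \<epsilon> + l\<^sup>2 * (16 * K\<^sup>2) / 2" unfolding Tc ..
    also have "\<dots> = - \<epsilon>\<^sup>2 / (32 * K\<^sup>2)"
      using K0 unfolding l_def by (simp add: power2_eq_square field_simps)
    finally have "- l * \<epsilon> + l\<^sup>2 * real T * c\<^sup>2 / 2 = - \<epsilon>\<^sup>2 / (32 * K\<^sup>2)" .
    also have "\<epsilon>\<^sup>2 = 128 * K\<^sup>2 * Lg" unfolding \<epsilon>_def using Lg0
      by (simp add: power_mult_distrib)
    finally show ?thesis using K0 by simp
  qed
  have expd: "exp (- 4 * Lg) \<le> \<delta>"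
  proof -
    have "- 4 * Lg \<le> ln \<delta>" using Lg1 Lg0 delta by (simp add: ln_div)
    then have "exp (- 4 * Lg) \<le> exp (ln \<delta>)" by simp
    then show ?thesis using delta by simp
  qed
  define Bad where "Bad = {\<omega> \<in> space M. EG + \<epsilon> \<le> G (Z \<omega>)}"
  have mcd: "measure M Bad \<le> exp (- l * \<epsilon> + l\<^sup>2 * real T * c\<^sup>2 / 2)"
    unfolding Bad_def EG_def Z_def G_def c_def D_def
    by (rule mcdiarmid_M[OF indep_vars_subset[OF s_indep] T C.Gf_meas C.Gf_bound C.Gf_diff l0]) auto
  have badd: "measure M Bad \<le> \<delta>" using mcd expo expd by simp
  have Badm: "Bad \<in> sets M" unfolding Bad_def using GZm by measurable
  have r2: "\<rho>\<^sup>2 < 1" using power_strict_mono[OF r1 r0, of 2] by simp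
  define A' where "A' = (norm \<xi>0)\<^sup>2 / (1 - \<rho>\<^sup>2)"
  define B' where "B' = 2 * s * norm \<xi>0 / (1 - \<rho>)\<^sup>2"
  define C' where "C' = s\<^sup>2 / (1 - \<rho>\<^sup>2)\<^sup>2"
  have A'0: "0 \<le> A'" unfolding A'_def using r2 by simp
  have B'0: "0 \<le> B'" unfolding B'_def using s_pos by simp
  have C'0: "0 \<le> C'" unfolding C'_def by simp
  have eps_eq: "1 / sqrt (real T) * (8 * s\<^sup>2 * sqrt (2 * ln (real CARD('n) / \<delta>)) / (1 - \<rho>)\<^sup>2) = \<epsilon>"
    unfolding \<epsilon>_def K_def D_def Lg_def N_def by (simp add: field_simps)
  have trid: "mtrace ((1 / real T) *\<^sub>R (\<Sum>t\<in>{1..T}. outer (v t)) - \<Sigma>) = (1/real T) * (\<Sum>t\<in>{1..T}. (norm (v t))\<^sup>2) - mtrace \<Sigma>"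
    for v :: "nat \<Rightarrow> real^'n"
  proof -
    have nv: "(norm (v t))\<^sup>2 = (\<Sum>i\<in>UNIV. v t $ i * v t $ i)" for t by (simp add: power2_norm_eq_inner inner_vec_def)
    show ?thesis unfolding mtrace_def outer_def nv
      by (simp add: sum_subtractf sum_distrib_left sum_component) (rule sum.swap)
  qed
  have det: "(\<Sum>t\<in>{1..T}. (norm (\<xi> t \<omega>))\<^sup>2) \<le> A' + B' + (\<Sum>t\<in>{1..T}. (norm (Ef Q t (\<lambda>k. sn k \<omega>)))\<^sup>2)"
    if \<omega>: "\<omega> \<in> space M" and b: "\<forall>t\<le>T. norm (sn t \<omega>) \<le> s" for \<omega>
  proof -
    have each: "(norm (\<xi> t \<omega>))\<^sup>2 \<le> (\<rho>\<^sup>2)^t * (norm \<xi>0)\<^sup>2 + (2 * s * norm \<xi>0 / (1-\<rho>)) * \<rho>^t + (norm (Ef Q t (\<lambda>k. sn k \<omega>)))\<^sup>2"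
      if tT: "t \<in> {1..T}" for t
    proof -
      define cc where "cc = qpow Q t *v \<xi>0"
      define e where "e = Ef Q t (\<lambda>k. sn k \<omega>)"
      have nc: "norm cc \<le> \<rho>^t * norm \<xi>0" unfolding cc_def by (rule qpow_norm[OF Qn r0])
      have ne: "norm e \<le> s / (1-\<rho>)" unfolding e_def
        by (rule Ef_bound[OF Qn r0 r1]) (use b tT s_pos in auto)
      have "norm (\<xi> t \<omega>) \<le> norm cc + norm e" unfolding closed[OF \<omega>] cc_def e_def by (rule norm_triangle_ineq)
      then have "(norm (\<xi> t \<omega>))\<^sup>2 \<le> (norm cc + norm e)\<^sup>2" by (intro power_mono) auto
      also have "\<dots> = (norm cc)\<^sup>2 + 2 * norm cc * norm e + (norm e)\<^sup>2" by (simp add: power2_sum)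
      also have "\<dots> \<le> (\<rho>^t * norm \<xi>0)\<^sup>2 + 2 * (\<rho>^t * norm \<xi>0) * (s/(1-\<rho>)) + (norm e)\<^sup>2"
        by (intro add_mono mult_mono power_mono nc ne order_refl mult_left_mono) (use r0 in auto)
      also have "\<dots> = (\<rho>\<^sup>2)^t * (norm \<xi>0)\<^sup>2 + (2 * s * norm \<xi>0 / (1-\<rho>)) * \<rho>^t + (norm e)\<^sup>2"
        by (simp add: power_mult_distrib power_mult[symmetric] mult.commute[of 2 t])
      finally show ?thesis unfolding e_def .
    qed
    have "(\<Sum>t\<in>{1..T}. (norm (\<xi> t \<omega>))\<^sup>2) \<le> (\<Sum>t\<in>{1..T}. (\<rho>\<^sup>2)^t * (norm \<xi>0)\<^sup>2 + (2 * s * norm \<xi>0 / (1-\<rho>)) * \<rho>^t + (norm (Ef Q t (\<lambda>k. sn k \<omega>)))\<^sup>2)"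
      by (rule sum_mono) (rule each)
    also have "\<dots> = (norm \<xi>0)\<^sup>2 * (\<Sum>t\<in>{1..T}. (\<rho>\<^sup>2)^t) + (2 * s * norm \<xi>0 / (1-\<rho>)) * (\<Sum>t\<in>{1..T}. \<rho>^t) + (\<Sum>t\<in>{1..T}. (norm (Ef Q t (\<lambda>k. sn k \<omega>)))\<^sup>2)"
      by (simp add: sum.distrib sum_distrib_left sum_divide_distrib[symmetric] sum_distrib_right[symmetric] mult.commute)
    also have "\<dots> \<le> (norm \<xi>0)\<^sup>2 * (1/(1-\<rho>\<^sup>2)) + (2 * s * norm \<xi>0 / (1-\<rho>)) * (1/(1-\<rho>)) + (\<Sum>t\<in>{1..T}. (norm (Ef Q t (\<lambda>k. sn k \<omega>)))\<^sup>2)"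
      by (intro add_mono mult_left_mono geo3 order_refl) (use r0 r1 r2 s_pos in auto)
    also have "\<dots> = A' + B' + (\<Sum>t\<in>{1..T}. (norm (Ef Q t (\<lambda>k. sn k \<omega>)))\<^sup>2)"
      unfolding A'_def B'_def by (simp add: power2_eq_square)
    finally show ?thesis .
  qed
  define bnd where "bnd = 1 / real T * ((norm \<xi>0)\<^sup>2 / (1 - \<rho>\<^sup>2))
            + 1 / real T * (2 * s * norm \<xi>0 / (1 - \<rho>)\<^sup>2)
            + 1 / real T * (s\<^sup>2 / (1 - \<rho>\<^sup>2)\<^sup>2)
            + 1 / sqrt (real T) * (8 * s\<^sup>2 * sqrt (2 * ln (real CARD('n) / \<delta>)) / (1 - \<rho>)\<^sup>2)"
  have bnd_eq: "bnd = A' / real T + B' / real T + C' / real T + \<epsilon>"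
    unfolding bnd_def eps_eq A'_def B'_def C'_def by (simp add: mult.commute)
  have bnd0: "0 \<le> bnd" unfolding bnd_eq using A'0 B'0 C'0 eps0 by simp
  define Good where "Good = {\<omega> \<in> space M.
           (1 / real CARD('n)) * mtrace ((1 / real T) *\<^sub>R (\<Sum>t\<in>{1..T}. outer (\<xi> t \<omega>)) - \<Sigma>) \<le> bnd}"
  have Good_eq: "Good = {\<omega> \<in> space M. (1 / real N) * ((1/real T) * (\<Sum>t\<in>{1..T}. (norm (qpow Q t *v \<xi>0 + Ef Q t (\<lambda>k. sn k \<omega>)))\<^sup>2) - mtrace \<Sigma>) \<le> bnd}"
    unfolding Good_def trid N_def by (auto simp: closed)
  have Good_m: "Good \<in> sets M" unfolding Good_eq using em by measurable
  have AEg: "AE \<omega> in M. \<omega> \<in> space M - Bad \<longrightarrow> \<omega> \<in> Good"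
    using s_bound
  proof (rule eventually_mono)
    fix \<omega> assume b: "\<forall>t\<le>T. norm (sn t \<omega>) \<le> s"
    show "\<omega> \<in> space M - Bad \<longrightarrow> \<omega> \<in> Good"
    proof
      assume \<omega>: "\<omega> \<in> space M - Bad"
      then have \<omega>s: "\<omega> \<in> space M" and nb: "G (Z \<omega>) < EG + \<epsilon>" by (auto simp: Bad_def)
      define X where "X = (1/real T) * (\<Sum>t\<in>{1..T}. (norm (\<xi> t \<omega>))\<^sup>2) - mtrace \<Sigma>"
      have T0: "0 < real T" using T by simp
      have "X \<le> (1/real T) * (A' + B' + (\<Sum>t\<in>{1..T}. (norm (Ef Q t (\<lambda>k. sn k \<omega>)))\<^sup>2)) - mtrace \<Sigma>"
        unfolding X_def using det[OF \<omega>s b] T0 by (simp add: divide_right_mono)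
      also have "\<dots> = A' / real T + B' / real T + G (Z \<omega>) - mtrace \<Sigma>"
        using GZ[OF b] by (simp add: add_divide_distrib)
      also have "\<dots> \<le> A' / real T + B' / real T + \<epsilon>" using nb EGle by simp
      also have "\<dots> \<le> bnd" unfolding bnd_eq using C'0 T0 by simp
      finally have Xb: "X \<le> bnd" .
      have "(1 / real N) * X \<le> bnd"
      proof (cases "0 \<le> X")
        case True
        have "(1 / real N) * X \<le> 1 * X" using Nge True by (intro mult_right_mono) auto
        then show ?thesis using Xb by simp
      next
        case False
        then have "(1 / real N) * X \<le> 0" using Nge by (intro mult_nonneg_nonpos) auto
        then show ?thesis using bnd0 by simp
      qed
      then show "\<omega> \<in> Good" unfolding Good_def trid using \<omega>s by (simp add: X_def N_def)
    qed
  qed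
  have "measure M (space M - Bad) \<le> measure M Good" by (rule finite_measure_mono_AE[OF AEg Good_m])
  moreover have "measure M (space M - Bad) = 1 - measure M Bad" by (rule prob_compl[OF Badm])
  ultimately have "1 - \<delta> \<le> measure M Good" using badd by simp
  then show ?thesis unfolding Good_def bnd_def .
qed

end
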